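(* Let $\pi,\tau\in\mathfrak{S}_m$ be in standard form. If $\pi_m-\pi_1>\tau_m-\tau_1$, then there is an integer $K$ such that $r^\pi_{1+k(m-1),k}<r^\tau_{1+k(m-1),k}$ for all $k\ge K$. In particular, $\pi$ and $\tau$ are not strongly c-Wilf equivalent.
   Context: The standardization $\operatorname{st}(w)$ of a word of distinct integers replaces its smallest entry by 1, the next smallest by 2, etc. For $\pi\in\mathfrak{S}_m$ and $\sigma\in\mathfrak{S}_n$, $\operatorname{Em}(\pi,\sigma)=\{i\in[n-m+1]:\operatorname{st}(\sigma_i\cdots\sigma_{i+m-1})=\pi\}$. The overlap set is $\mathcal{O}_\pi=\{i\in[m-1]:\operatorname{st}(\pi_{i+1}\cdots\pi_m)=\operatorname{st}(\pi_1\cdots\pi_{m-i})\}$. A $\pi$-cluster is a pair $(\sigma,S)$ with $\sigma\in\mathfrak{S}_n$ and $S=\{i_1<\dots<i_k\}\subseteq\operatorname{Em}(\pi,\sigma)$ such that $i_1=1$, $i_k=n-m+1$, and $i_{j+1}-i_j\in\mathcal{O}_\pi$ for all $j\in[k-1]$. The cluster number $r^\pi_{n,k}$ is the number of $\pi$-clusters $(\sigma,S)$ with $\sigma\in\mathfrak{S}_n$ and $|S|=k$. Letting $a^\pi_{n,k}$ be the number of $\sigma\in\mathfrak{S}_n$ with $|\operatorname{Em}(\pi,\sigma)|=k$, $\pi$ and $\tau$ are strongly c-Wilf equivalent if $a^\pi_{n,k}=a^\tau_{n,k}$ for all $n,k$. $\pi\in\mathfrak{S}_m$ is in standard form if $\pi_1<\pi_m$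 and $\pi_1+\pi_m\le m+1$. *)

theory Defs
  imports Main
begin

text \<open>Permutations of [n] are represented as lists of naturals (one-line notation,
  1-based values); positions are 1-based in the paper, list indices 0-based here.\<close>

definition is_perm :: "nat \<Rightarrow> nat list \<Rightarrow> bool" where
  "is_perm n xs \<longleftrightarrow> length xs = n \<and> distinct xs \<and> set xs = {1..n}"

definition st :: "nat list \<Rightarrow> nat list" where
  "st w = map (\<lambda>x. card {y \<in> set w. y \<le> x}) w"

definition Em :: "nat list \<Rightarrow> nat list \<Rightarrow> nat set" where
  "Em p s = {i \<in> {1..length s - length p + 1}.
              st (take (length p) (drop (i - 1) s)) = p}"

definition overlaps :: "nat list \<Rightarrow> nat set" where
  "overlaps p = {i \<in> {1..length p - 1}. st (drop i p) = st (take (length p - i) p)}"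

definition is_cluster :: "nat list \<Rightarrow> nat list \<Rightarrow> nat set \<Rightarrow> bool" where
  "is_cluster p s S \<longleftrightarrow>
     S \<subseteq> Em p s \<and> S \<noteq> {} \<and>
     (let L = sorted_list_of_set S in
        hd L = 1 \<and> last L = length s - length p + 1 \<and>
        (\<forall>j. j + 1 < length L \<longrightarrow> L ! (j + 1) - L ! j \<in> overlaps p))"

definition cluster_num :: "nat list \<Rightarrow> nat \<Rightarrow> nat \<Rightarrow> nat" where
  "cluster_num p n k = card {(s, S). is_perm n s \<and> is_cluster p s S \<and> card S = k}"

definition occ_num :: "nat list \<Rightarrow> nat \<Rightarrow> nat \<Rightarrow> nat" where
  "occ_num p n k = card {s. is_perm n s \<and> card (Em p s) = k}"

definition strongly_cwilf_equiv :: "nat list \<Rightarrow> nat list \<Rightarrow> bool" where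
  "strongly_cwilf_equiv p t \<longleftrightarrow> (\<forall>n k. occ_num p n k = occ_num t n k)"

definition standard_form :: "nat list \<Rightarrow> bool" where
  "standard_form p \<longleftrightarrow> p ! 0 < p ! (length p - 1) \<and>
                         p ! 0 + p ! (length p - 1) \<le> length p + 1"

end

theory Submission
  imports Defs "HOL-Library.FuncSet" "HOL-Combinatorics.Permutations" Complex_Main
begin

definition rk :: "nat list \<Rightarrow> nat \<Rightarrow> nat" where
  "rk w x = card {y \<in> set w. y \<le> x}"

lemma st_rk: "st w = map (rk w) w"
  by (simp add: st_def rk_def)

lemma length_st[simp]: "length (st w) = length w"
  by (simp add: st_def)

lemma rk_strict:
  assumes "x \<in> set w" "y \<in> set w" "x < y"
  shows "rk w x < rk w y"
proof -
  have "{z \<in> set w. z \<le> x} \<subset> {z \<in> set w. z \<le> y}"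
  proof
    show "{z \<in> set w. z \<le> x} \<subseteq> {z \<in> set w. z \<le> y}" using assms by auto
    have "y \<in> {z \<in> set w. z \<le> y}" "y \<notin> {z \<in> set w. z \<le> x}" using assms by auto
    then show "{z \<in> set w. z \<le> x} \<noteq> {z \<in> set w. z \<le> y}" by blast
  qed
  then show ?thesis unfolding rk_def by (rule psubset_card_mono[rotated]) simp
qed

lemma rk_less_iff:
  assumes "x \<in> set w" "y \<in> set w"
  shows "rk w x < rk w y \<longleftrightarrow> x < y"
  using rk_strict[OF assms] rk_strict[OF assms(2,1)]
  by (metis less_irrefl linorder_neqE_nat not_less_iff_gr_or_eq)

lemma st_map_mono:
  assumes "\<And>x y. x \<in> set w \<Longrightarrow> y \<in> set w \<Longrightarrow> x < y \<Longrightarrow> f x < f y"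
  shows "st (map f w) = st w"
proof -
  have inj: "inj_on f (set w)"
    by (metis assms inj_onI linorder_neqE_nat less_irrefl)
  have le: "f y \<le> f x \<longleftrightarrow> y \<le> x" if "x \<in> set w" "y \<in> set w" for x y
    using assms[OF that] assms[OF that(2,1)]
    by (metis le_less less_asym linorder_neqE_nat)
  have "card {z \<in> f ` set w. z \<le> f x} = card {y \<in> set w. y \<le> x}" if "x \<in> set w" for x
  proof -
    have "{z \<in> f ` set w. z \<le> f x} = f ` {y \<in> set w. y \<le> x}"
      using le[OF that] by auto
    moreover have "inj_on f {y \<in> set w. y \<le> x}" using inj by (rule inj_on_subset) auto
    ultimately show ?thesis by (simp add: card_image)
  qed
  then show ?thesis by (simp add: st_def)
qed

lemma st_map_rk: "set u \<subseteq> set w \<Longrightarrow> st (map (rk w) u) = st u"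
  by (rule st_map_mono) (auto intro: rk_strict)

lemma st_take_drop_st: "st (take a (drop b (st w))) = st (take a (drop b w))"
proof -
  have "take a (drop b (st w)) = map (rk w) (take a (drop b w))"
    by (simp add: st_rk take_map drop_map)
  moreover have "set (take a (drop b w)) \<subseteq> set w"
    by (meson in_set_dropD in_set_takeD subsetI)
  ultimately show ?thesis by (simp add: st_map_rk)
qed

lemma st_take_st: "st (take a (st w)) = st (take a w)"
  using st_take_drop_st[of a 0 w] by simp

lemma st_drop_st: "st (drop b (st w)) = st (drop b w)"
  using st_take_drop_st[of "length w" b w] by simp

lemma st_nth: "i < length w \<Longrightarrow> st w ! i = rk w (w ! i)"
  by (simp add: st_rk)

lemma st_nth_less:
  assumes "i < length w" "j < length w"
  shows "st w ! i < st w ! j \<longleftrightarrow> w ! i < w ! j"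
  using assms by (simp add: st_nth rk_less_iff)

lemma st_perm:
  assumes "is_perm n u" shows "st u = u"
proof -
  have "rk u x = x" if "x \<in> set u" for x
  proof -
    have "x \<in> {1..n}" using assms that by (simp add: is_perm_def)
    then have "{y \<in> set u. y \<le> x} = {1..x}" using assms by (auto simp: is_perm_def)
    then show ?thesis by (simp add: rk_def)
  qed
  then show ?thesis by (simp add: st_rk map_idI)
qed

lemma card_set_filter_nth:
  assumes "distinct w"
  shows "card {y \<in> set w. P y} = card {j. j < length w \<and> P (w ! j)}"
proof -
  have "{y \<in> set w. P y} = (nth w) ` {j. j < length w \<and> P (w ! j)}"
    by (auto simp: in_set_conv_nth)
  moreover have "inj_on (nth w) {j. j < length w \<and> P (w ! j)}"
    using assms by (auto simp: inj_on_def nth_eq_iff_index_eq)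
  ultimately show ?thesis by (simp add: card_image)
qed

lemma rk_pos: "x \<in> set w \<Longrightarrow> rk w x \<ge> 1"
  unfolding rk_def
  by (metis (mono_tags, lifting) One_nat_def Suc_leI card_gt_0_iff empty_iff finite_set
      finite_subset mem_Collect_eq order_refl subsetI)

lemma rk_le: "rk w x \<le> card (set w)"
  unfolding rk_def by (rule card_mono) auto

lemma is_perm_st:
  assumes "distinct w" shows "is_perm (length w) (st w)"
proof -
  have inj: "inj_on (rk w) (set w)"
    by (metis inj_onI linorder_neqE_nat rk_strict less_irrefl)
  have sub: "rk w ` set w \<subseteq> {1..length w}"
  proof
    fix z assume "z \<in> rk w ` set w"
    then obtain x where "x \<in> set w" "z = rk w x" by auto
    then show "z \<in> {1..length w}" using rk_pos[of x w] rk_le[of w x] distinct_card[OF assms] by auto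
  qed
  have "card (rk w ` set w) = length w"
    using inj assms by (simp add: card_image distinct_card)
  then have "rk w ` set w = {1..length w}"
    using sub by (metis card_atLeastAtMost card_subset_eq diff_Suc_1 finite_atLeastAtMost)
  moreover have "distinct (st w)" using assms inj by (simp add: st_rk distinct_map)
  ultimately show ?thesis by (simp add: is_perm_def st_rk)
qed

lemma st_eq_by_order:
  assumes "length w = length t" "is_perm (length t) t"
    and ord: "\<And>i j. i < length t \<Longrightarrow> j < length t \<Longrightarrow> t ! i < t ! j \<Longrightarrow> w ! i < w ! j"
  shows "st w = t"
proof -
  let ?n = "length t"
  have dt: "distinct t" using assms(2) by (simp add: is_perm_def)
  have dw: "distinct w"
  proof -
    have "w ! i \<noteq> w ! j" if "i < ?n" "j < ?n" "i \<noteq> j" for i j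
      using ord[OF that(1,2)] ord[OF that(2,1)] dt that
      by (metis less_irrefl linorder_neqE_nat nth_eq_iff_index_eq)
    then show ?thesis using assms(1) by (simp add: distinct_conv_nth)
  qed
  have le_iff: "w ! j \<le> w ! i \<longleftrightarrow> t ! j \<le> t ! i" if "i < ?n" "j < ?n" for i j
  proof (cases "i = j")
    case False
    then have "t ! i \<noteq> t ! j" using dt that by (simp add: nth_eq_iff_index_eq)
    then show ?thesis using ord[OF that] ord[OF that(2,1)] by (meson less_asym linorder_neqE_nat not_le)
  qed simp
  show ?thesis
  proof (rule nth_equalityI)
    show "length (st w) = length t" using assms by simp
    fix i assume i: "i < length (st w)"
    then have i': "i < ?n" using assms by simp
    have "st w ! i = card {y \<in> set w. y \<le> w ! i}"
      using i by (simp add: st_nth rk_def)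
    also have "\<dots> = card {j. j < ?n \<and> w ! j \<le> w ! i}"
      using card_set_filter_nth[OF dw] assms(1) by simp
    also have "\<dots> = card {j. j < ?n \<and> t ! j \<le> t ! i}"
      using le_iff[OF i'] by (metis (lifting) )
    also have "\<dots> = card {y \<in> set t. y \<le> t ! i}"
      using card_set_filter_nth[OF dt] by simp
    also have "\<dots> = st t ! i" using i' by (simp add: st_nth rk_def)
    also have "\<dots> = t ! i" using st_perm[OF assms(2)] by simp
    finally show "st w ! i = t ! i" .
  qed
qed


lemma Em_iff:
  assumes "length p \<ge> 1"
  shows "i \<in> Em p s \<longleftrightarrow> 1 \<le> i \<and> i + length p - 1 \<le> length s \<and>
            st (take (length p) (drop (i - 1) s)) = p"
proof
  assume h: "i \<in> Em p s"
  then have st: "st (take (length p) (drop (i - 1) s)) = p" and i: "1 \<le> i"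
    by (auto simp: Em_def)
  then have "length (take (length p) (drop (i - 1) s)) = length p"
    by (metis length_st)
  then have "i - 1 + length p \<le> length s" using assms by (auto simp: min_def split: if_splits)
  then show "1 \<le> i \<and> i + length p - 1 \<le> length s \<and> st (take (length p) (drop (i - 1) s)) = p"
    using i st by auto
next
  assume "1 \<le> i \<and> i + length p - 1 \<le> length s \<and> st (take (length p) (drop (i - 1) s)) = p"
  then show "i \<in> Em p s" using assms by (auto simp: Em_def)
qed

lemma Em_bound:
  assumes "length p \<ge> 1" "i \<in> Em p s"
  shows "1 \<le> i" "i + length p - 1 \<le> length s"
  using Em_iff[OF assms(1)] assms(2) by auto

lemma Em_subset: "length p \<ge> 1 \<Longrightarrow> Em p s \<subseteq> {1..length s}"
  using Em_bound by fastforce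

lemma finite_Em[simp]: "finite (Em p s)"
  unfolding Em_def by simp

lemma Em_take:
  assumes "length p \<ge> 1" "L \<le> length s" "1 \<le> i" "i + length p - 1 \<le> L"
  shows "i \<in> Em p (st (take L s)) \<longleftrightarrow> i \<in> Em p s"
proof -
  have "length p \<le> L - (i - 1)" using assms by linarith
  then have "take (length p) (drop (i - 1) (take L s)) = take (length p) (drop (i - 1) s)"
    by (simp add: drop_take min_def)
  then show ?thesis using assms
    by (simp add: Em_iff st_take_drop_st)
qed

lemma Em_drop:
  assumes "length p \<ge> 1" "L \<le> length s"
  shows "i \<in> Em p (st (drop L s)) \<longleftrightarrow> 1 \<le> i \<and> L + i \<in> Em p s"
proof -
  have "drop (i - 1) (drop L s) = drop (L + i - 1) s" if "1 \<le> i" using that by (simp add: add.commute)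
  then show ?thesis using assms
    by (auto simp: Em_iff st_take_drop_st)
qed

lemma overlap_of_Em:
  assumes m: "length p \<ge> 1" and i: "i \<in> Em p s" and ig: "i + g \<in> Em p s"
    and g: "1 \<le> g" "g \<le> length p - 1"
  shows "g \<in> overlaps p"
proof -
  let ?m = "length p"
  define W1 where "W1 = take ?m (drop (i - 1) s)"
  define W2 where "W2 = take ?m (drop (i + g - 1) s)"
  have i1: "1 \<le> i" using Em_bound[OF m i] by simp
  have p1: "st W1 = p" using i m by (simp add: Em_iff W1_def)
  have p2: "st W2 = p" using ig m by (simp add: Em_iff W2_def)
  have "st (drop g p) = st (drop g W1)"
    using p1 st_drop_st[of g W1] by simp
  also have "drop g W1 = take (?m - g) W2"
  proof -
    have "drop g W1 = take (?m - g) (drop g (drop (i - 1) s))"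
      by (simp add: W1_def drop_take)
    also have "drop g (drop (i - 1) s) = drop (i + g - 1) s" using i1 by (simp add: add.commute)
    finally show ?thesis by (simp add: W2_def)
  qed
  also have "st (take (?m - g) W2) = st (take (?m - g) p)"
    using p2 st_take_st[of "?m - g" W2] by simp
  finally show ?thesis using g by (simp add: overlaps_def)
qed


definition perms :: "nat \<Rightarrow> nat list set" where
  "perms n = {s. is_perm n s}"

lemma finite_perms[simp]: "finite (perms n)"
proof -
  have "perms n \<subseteq> {xs. set xs \<subseteq> {1..n} \<and> length xs = n}"
    by (auto simp: perms_def is_perm_def)
  moreover have "finite {xs. set xs \<subseteq> {1..n} \<and> length xs = n}"
    by (rule finite_lists_length_eq) simp
  ultimately show ?thesis by (rule finite_subset)
qed

definition rl :: "nat set \<Rightarrow> nat list \<Rightarrow> nat list" where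
  "rl V u = map (\<lambda>x. sorted_list_of_set V ! (x - 1)) u"

lemma sl_card:
  assumes "finite V" "i < card V"
  shows "card {y \<in> V. y \<le> sorted_list_of_set V ! i} = Suc i"
proof -
  let ?xs = "sorted_list_of_set V"
  have sw: "sorted_wrt (<) ?xs" by (rule strict_sorted_list_of_set)
  have len: "length ?xs = card V" by simp
  have setx: "set ?xs = V" using assms by simp
  have le: "?xs ! j \<le> ?xs ! i \<longleftrightarrow> j \<le> i" if "j < card V" for j
  proof -
    have "j < i \<Longrightarrow> ?xs ! j < ?xs ! i" using sorted_wrt_nth_less[OF sw] assms len by auto
    moreover have "i < j \<Longrightarrow> ?xs ! i < ?xs ! j" using sorted_wrt_nth_less[OF sw] that len by auto
    ultimately show ?thesis by (metis le_less linorder_neqE_nat not_le)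
  qed
  have "{y \<in> V. y \<le> ?xs ! i} = (nth ?xs) ` {..i}"
  proof
    show "{y \<in> V. y \<le> ?xs ! i} \<subseteq> (nth ?xs) ` {..i}"
    proof
      fix y assume y: "y \<in> {y \<in> V. y \<le> ?xs ! i}"
      then obtain j where j: "j < card V" "y = ?xs ! j" using setx len by (metis (no_types, lifting) in_set_conv_nth mem_Collect_eq)
      then show "y \<in> (nth ?xs) ` {..i}" using le[OF j(1)] y by auto
    qed
    show "(nth ?xs) ` {..i} \<subseteq> {y \<in> V. y \<le> ?xs ! i}"
    proof
      fix y assume "y \<in> (nth ?xs) ` {..i}"
      then obtain j where j: "j \<le> i" "y = ?xs ! j" by auto
      then have "j < length ?xs" using assms len by linarith
      then have "y \<in> V" using j setx nth_mem by metis
      then show "y \<in> {y \<in> V. y \<le> ?xs ! i}" using le j assms by auto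
    qed
  qed
  moreover have "inj_on (nth ?xs) {..i}"
    using sorted_wrt_nth_less[OF sw] assms len
    by (intro inj_onI) (metis atMost_iff le_less_trans less_irrefl linorder_neqE_nat)
  ultimately show ?thesis by (simp add: card_image)
qed

lemma rl_props:
  assumes "finite V" "is_perm (card V) u"
  shows "distinct (rl V u)" "set (rl V u) = V" "st (rl V u) = u" "length (rl V u) = card V"
proof -
  let ?xs = "sorted_list_of_set V"
  let ?phi = "\<lambda>x. ?xs ! (x - 1)"
  have sw: "sorted_wrt (<) ?xs" by (rule strict_sorted_list_of_set)
  have su: "set u = {1..card V}" using assms by (simp add: is_perm_def)
  have mono: "?phi x < ?phi y" if "x \<in> set u" "y \<in> set u" "x < y" for x y
    using sorted_wrt_nth_less[OF sw, of "x - 1" "y - 1"] that su by auto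
  have inj: "inj_on ?phi (set u)"
  proof (rule inj_onI)
    fix x y assume xy: "x \<in> set u" "y \<in> set u" "?phi x = ?phi y"
    show "x = y"
    proof (rule ccontr)
      assume "x \<noteq> y"
      then have "x < y \<or> y < x" by arith
      then show False using mono[OF xy(1,2)] mono[OF xy(2,1)] xy(3) by auto
    qed
  qed
  show "distinct (rl V u)" using assms inj by (simp add: rl_def distinct_map is_perm_def)
  show "st (rl V u) = u" unfolding rl_def
    using st_map_mono[of u ?phi] mono st_perm[OF assms(2)] by simp
  have "?phi ` {1..card V} = set ?xs"
  proof
    show "?phi ` {1..card V} \<subseteq> set ?xs" by (auto intro!: nth_mem)
    show "set ?xs \<subseteq> ?phi ` {1..card V}"
    proof
      fix y assume "y \<in> set ?xs"
      then obtain j where "j < card V" "y = ?xs ! j" by (auto simp: in_set_conv_nth)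
      then show "y \<in> ?phi ` {1..card V}" by (intro image_eqI[of _ _ "Suc j"]) auto
    qed
  qed
  then show "set (rl V u) = V" using su assms by (simp add: rl_def)
  show "length (rl V u) = card V" using assms by (simp add: rl_def is_perm_def)
qed

lemma rl_st:
  assumes "distinct x" shows "rl (set x) (st x) = x"
proof -
  let ?xs = "sorted_list_of_set (set x)"
  have "?xs ! (rk x v - 1) = v" if vx: "v \<in> set x" for v
  proof -
    obtain i where i: "i < card (set x)" "v = ?xs ! i"
    proof -
      have "v \<in> set ?xs" using vx by simp
      then obtain i where "i < length ?xs" "?xs ! i = v" unfolding in_set_conv_nth by blast
      then show ?thesis using that by simp
    qed
    have "rk x v = Suc i" using sl_card[OF _ i(1)] i(2) by (simp add: rk_def)
    then show ?thesis using i by simp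
  qed
  then show ?thesis by (simp add: rl_def st_rk map_idI)
qed

lemma set_drop_distinct:
  assumes "distinct s" shows "set (drop L s) = set s - set (take L s)"
proof -
  have "set s = set (take L s) \<union> set (drop L s)" by (metis append_take_drop_id set_append)
  moreover have "set (take L s) \<inter> set (drop L s) = {}"
    using assms by (metis append_take_drop_id distinct_append)
  ultimately show ?thesis by blast
qed

lemma split_sum:
  fixes f g :: "nat list \<Rightarrow> nat"
  assumes "L \<le> n"
  shows "(\<Sum>s\<in>perms n. f (st (take L s)) * g (st (drop L s)))
          = (n choose L) * ((\<Sum>u\<in>perms L. f u) * (\<Sum>w\<in>perms (n - L). g w))"
proof -
  define Vs where "Vs = {V. V \<subseteq> {1..n} \<and> card V = L}"
  define h where "h s = (set (take L s), st (take L s), st (drop L s))" for s :: "nat list"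
  have bij: "bij_betw h (perms n) (Vs \<times> (perms L \<times> perms (n - L)))"
  proof (rule bij_betwI')
    fix s s' assume s: "s \<in> perms n" and s': "s' \<in> perms n"
    show "h s = h s' \<longleftrightarrow> s = s'"
    proof
      assume hh: "h s = h s'"
      have ds: "distinct s" "distinct s'" using s s' by (auto simp: perms_def is_perm_def)
      from hh have e: "set (take L s) = set (take L s')" "st (take L s) = st (take L s')"
        "st (drop L s) = st (drop L s')" by (simp_all add: h_def)
      have "take L s = rl (set (take L s)) (st (take L s))"
        by (rule rl_st[symmetric]) (use ds in simp)
      also have "\<dots> = rl (set (take L s')) (st (take L s'))" using e by simp
      also have "\<dots> = take L s'"
        by (rule rl_st) (use ds in simp)
      finally have "take L s = take L s'" .
      moreover have "set (drop L s) = set s - set (take L s)"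
        using ds(1) by (rule set_drop_distinct)
      moreover have "set (drop L s') = set s' - set (take L s')"
        using ds(2) by (rule set_drop_distinct)
      moreover have "set s = set s'" using s s' by (simp add: perms_def is_perm_def)
      ultimately have e2: "set (drop L s) = set (drop L s')" using e by simp
      have "drop L s = rl (set (drop L s)) (st (drop L s))"
        by (rule rl_st[symmetric]) (use ds in simp)
      also have "\<dots> = rl (set (drop L s')) (st (drop L s'))" using e e2 by simp
      also have "\<dots> = drop L s'"
        by (rule rl_st) (use ds in simp)
      finally have "drop L s = drop L s'" .
      then show "s = s'" using \<open>take L s = take L s'\<close> by (metis append_take_drop_id)
    qed simp
  next
    fix s assume s: "s \<in> perms n"
    then have ps: "is_perm n s" by (simp add: perms_def)
    have d: "distinct (take L s)" "distinct (drop L s)" using ps by (auto simp: is_perm_def)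
    have "set (take L s) \<subseteq> {1..n}" using ps by (metis is_perm_def set_take_subset)
    moreover have "card (set (take L s)) = L" using d ps assms by (simp add: distinct_card is_perm_def)
    moreover have "is_perm L (st (take L s))" using is_perm_st[OF d(1)] ps assms by (simp add: is_perm_def)
    moreover have "is_perm (n - L) (st (drop L s))" using is_perm_st[OF d(2)] ps by (simp add: is_perm_def)
    ultimately show "h s \<in> Vs \<times> (perms L \<times> perms (n - L))" by (simp add: h_def Vs_def perms_def)
  next
    fix x assume "x \<in> Vs \<times> (perms L \<times> perms (n - L))"
    then obtain V u w where x: "x = (V, u, w)" and V: "V \<subseteq> {1..n}" "card V = L"
      and u: "is_perm L u" and w: "is_perm (n - L) w"
      by (auto simp: Vs_def perms_def)
    have fV: "finite V" using V finite_subset by blast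
    have cW: "card ({1..n} - V) = n - L" using V by (simp add: card_Diff_subset fV)
    note R1 = rl_props[OF fV, unfolded V(2), OF u]
    note R2 = rl_props[of "{1..n} - V", unfolded cW, OF _ w]
    define s where "s = rl V u @ rl ({1..n} - V) w"
    have ts: "take L s = rl V u" using R1 by (simp add: s_def)
    have ds: "drop L s = rl ({1..n} - V) w" using R1 by (simp add: s_def)
    have "is_perm n s"
    proof -
      have "length s = n" using R1 R2 V assms by (simp add: s_def)
      moreover have "distinct s" using R1(1,2) R2(1,2) by (auto simp: s_def)
      moreover have "set s = {1..n}" using R1(2) R2(2) V by (auto simp: s_def)
      ultimately show ?thesis by (simp add: is_perm_def)
    qed
    moreover have "h s = x" using R1 R2 by (simp add: h_def ts ds x)
    ultimately show "\<exists>s\<in>perms n. x = h s" by (auto simp: perms_def)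
  qed
  have "(\<Sum>s\<in>perms n. f (st (take L s)) * g (st (drop L s)))
        = (\<Sum>s\<in>perms n. (\<lambda>(V, u, w). f u * g w) (h s))"
    by (simp add: h_def)
  also have "\<dots> = (\<Sum>x\<in>Vs \<times> (perms L \<times> perms (n - L)). (\<lambda>(V, u, w). f u * g w) x)"
    by (rule sum.reindex_bij_betw[OF bij])
  also have "\<dots> = (\<Sum>V\<in>Vs. \<Sum>y\<in>perms L \<times> perms (n - L). (\<lambda>(u, w). f u * g w) y)"
    by (rule sum.cartesian_product[symmetric])
  also have "\<dots> = card Vs * (\<Sum>y\<in>perms L \<times> perms (n - L). (\<lambda>(u, w). f u * g w) y)"
    by simp
  also have "(\<Sum>y\<in>perms L \<times> perms (n - L). (\<lambda>(u, w). f u * g w) y)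
           = (\<Sum>u\<in>perms L. f u) * (\<Sum>w\<in>perms (n - L). g w)"
    by (simp add: sum_product sum.cartesian_product)
  also have "card Vs = n choose L"
    unfolding Vs_def using n_subsets[of "{1..n}" L] by simp
  finally show ?thesis .
qed


definition clean :: "nat list \<Rightarrow> nat set \<Rightarrow> nat \<Rightarrow> bool" where
  "clean p S c \<longleftrightarrow> (\<forall>i\<in>S. i \<le> c \<longrightarrow> i + length p - 1 \<le> c)"

lemma sl_less_iff:
  assumes "finite S" "k < card S" "k' < card S"
  shows "sorted_list_of_set S ! k < sorted_list_of_set S ! k' \<longleftrightarrow> k < k'"
proof -
  have sw: "sorted_wrt (<) (sorted_list_of_set S)" by (rule strict_sorted_list_of_set)
  show ?thesis
    using sorted_wrt_nth_less[OF sw, of k k'] sorted_wrt_nth_less[OF sw, of k' k] assms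
    by (metis less_asym linorder_neqE_nat sorted_list_of_set.length_sorted_key_list_of_set)
qed

lemma sl_mem:
  assumes "finite S" "k < card S"
  shows "sorted_list_of_set S ! k \<in> S"
  using assms by (metis nth_mem sorted_list_of_set.length_sorted_key_list_of_set
      sorted_list_of_set.set_sorted_key_list_of_set)

lemma sl_obtain:
  assumes "finite S" "x \<in> S"
  obtains k where "k < card S" "sorted_list_of_set S ! k = x"
proof -
  have "x \<in> set (sorted_list_of_set S)" using assms by simp
  then obtain k where "k < length (sorted_list_of_set S)" "sorted_list_of_set S ! k = x"
    unfolding in_set_conv_nth by blast
  then show ?thesis using that by simp
qed

lemma cluster_char:
  assumes m: "length p \<ge> 2" and SE: "S \<subseteq> Em p u"
  shows "is_cluster p u S \<longleftrightarrow>
           1 \<in> S \<and> (\<forall>c. 1 \<le> c \<and> c < length u \<longrightarrow> \<not> clean p S c)"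
proof -
  let ?m = "length p"
  let ?L = "length u"
  let ?xs = "sorted_list_of_set S"
  have m1: "?m \<ge> 1" using m by simp
  have fS: "finite S" using SE finite_subset finite_Em by blast
  have len: "length ?xs = card S" by simp
  have Sb: "1 \<le> i \<and> i + ?m - 1 \<le> ?L" if "i \<in> S" for i
    using Em_bound[OF m1] SE that by blast
  note less = sl_less_iff[OF fS]
  note mem = sl_mem[OF fS]
  show ?thesis
  proof
    assume cl: "is_cluster p u S"
    then have ne: "S \<noteq> {}" and hd1: "hd ?xs = 1" and lst: "last ?xs = ?L - ?m + 1"
      and gaps: "\<And>j. j + 1 < length ?xs \<Longrightarrow> ?xs ! (j + 1) - ?xs ! j \<in> overlaps p"
      by (auto simp: is_cluster_def Let_def)
    have cpos: "card S > 0" using ne fS by (simp add: card_gt_0_iff)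
    have x0: "?xs ! 0 = 1" using hd1 cpos by (metis hd_conv_nth len less_numeral_extra(3) list.size(3))
    have xl: "?xs ! (card S - 1) = ?L - ?m + 1" using lst cpos
      by (metis last_conv_nth len less_numeral_extra(3) list.size(3))
    have "1 \<in> S" using x0 mem[of 0] cpos by metis
    moreover have "\<not> clean p S c" if c: "1 \<le> c" "c < ?L" for c
    proof
      assume clc: "clean p S c"
      define J where "J = {j. j < card S \<and> ?xs ! j \<le> c}"
      have "0 \<in> J" using x0 cpos c by (simp add: J_def)
      have fJ: "finite J" by (simp add: J_def)
      define j where "j = Max J"
      have jJ: "j \<in> J" using Max_in[OF fJ] \<open>0 \<in> J\<close> j_def by blast
      then have j: "j < card S" "?xs ! j \<le> c" by (auto simp: J_def)
      have jm: "?xs ! j + ?m - 1 \<le> c" using clc j mem[OF j(1)] by (simp add: clean_def)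
      show False
      proof (cases "j + 1 < card S")
        case True
        have "j + 1 \<notin> J" using Max_ge[OF fJ] j_def by fastforce
        then have gt: "?xs ! (j + 1) > c" using True by (auto simp: J_def)
        have "?xs ! (j + 1) - ?xs ! j \<in> overlaps p" using gaps True by simp
        then have "?xs ! (j + 1) - ?xs ! j \<le> ?m - 1" by (simp add: overlaps_def)
        then show False using gt jm m by linarith
      next
        case False
        then have "j = card S - 1" using j by linarith
        then have "?xs ! j = ?L - ?m + 1" using xl by simp
        then show False using jm c m Sb[OF mem[OF j(1)]] by linarith
      qed
    qed
    ultimately show "1 \<in> S \<and> (\<forall>c. 1 \<le> c \<and> c < ?L \<longrightarrow> \<not> clean p S c)" by blast
  next
    assume h: "1 \<in> S \<and> (\<forall>c. 1 \<le> c \<and> c < ?L \<longrightarrow> \<not> clean p S c)"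
    then have one: "1 \<in> S" and nc: "\<And>c. 1 \<le> c \<Longrightarrow> c < ?L \<Longrightarrow> \<not> clean p S c" by auto
    have ne: "S \<noteq> {}" using one by auto
    have cpos: "card S > 0" using ne fS by (simp add: card_gt_0_iff)
    have x0: "?xs ! 0 = 1"
    proof -
      obtain k where k: "k < card S" "?xs ! k = 1" using sl_obtain[OF fS one] by blast
      have "?xs ! 0 \<le> 1" using less[OF cpos k(1)] k by (metis le_less neq0_conv)
      moreover have "?xs ! 0 \<ge> 1" using Sb[OF mem[OF cpos]] by simp
      ultimately show ?thesis by simp
    qed
    define l where "l = ?xs ! (card S - 1)"
    have lS: "l \<in> S" using mem cpos l_def by simp
    have lmax: "i \<le> l" if iS0: "i \<in> S" for i
    proof -
      obtain k where k: "k < card S" "?xs ! k = i" using sl_obtain[OF fS iS0] by blast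
      show ?thesis
      proof (cases "k = card S - 1")
        case True then show ?thesis using k l_def by simp
      next
        case False
        then have "k < card S - 1" using k by linarith
        then show ?thesis using less[OF k(1), of "card S - 1"] k cpos l_def by simp
      qed
    qed
    have "clean p S (l + ?m - 1)" unfolding clean_def
    proof (intro ballI impI)
      fix i assume "i \<in> S" then have "i \<le> l" by (rule lmax)
      then show "i + ?m - 1 \<le> l + ?m - 1" using m by linarith
    qed
    then have "\<not> (l + ?m - 1 < ?L)"
    proof -
      assume cl: "clean p S (l + ?m - 1)"
      have "1 \<le> l + ?m - 1" using Sb[OF lS] m by linarith
      then show ?thesis using nc cl by blast
    qed
    then have xl: "l = ?L - ?m + 1" using Sb[OF lS] by linarith
    have gap: "?xs ! (j + 1) - ?xs ! j \<in> overlaps p" if j: "j + 1 < card S" for j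
    proof -
      let ?i = "?xs ! j" and ?i' = "?xs ! (j + 1)"
      have lt: "?i < ?i'" using less j by simp
      have iS: "?i \<in> S" "?i' \<in> S" using mem j by auto
      have between: "x \<le> ?i" if xS: "x \<in> S" "x < ?i'" for x
      proof -
        obtain k where k: "k < card S" "?xs ! k = x" using sl_obtain[OF fS xS(1)] by blast
        have "k < j + 1" using less[OF k(1) j] k xS by simp
        then have "k \<le> j" by simp
        then show ?thesis
        proof (cases "k = j")
          case False
          then have "k < j" using \<open>k \<le> j\<close> by simp
          then show ?thesis using less[OF k(1), of j] j k by simp
        qed (use k in simp)
      qed
      have "?i' - ?i \<le> ?m - 1"
      proof (rule ccontr)
        assume "\<not> ?i' - ?i \<le> ?m - 1"
        then have big: "?i + ?m - 1 < ?i'" by linarith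
        have "clean p S (?i + ?m - 1)"
          unfolding clean_def
        proof (intro ballI impI)
          fix x assume "x \<in> S" "x \<le> ?i + ?m - 1"
          then have "x \<le> ?i" using between big by simp
          then show "x + ?m - 1 \<le> ?i + ?m - 1" by simp
        qed
        moreover have "1 \<le> ?i + ?m - 1" using Sb[OF iS(1)] m by linarith
        moreover have "?i + ?m - 1 < ?L" using Sb[OF iS(2)] big m by linarith
        ultimately show False using nc by blast
      qed
      moreover have "?xs ! j + (?i' - ?i) \<in> Em p u" using iS SE lt by auto
      ultimately show ?thesis using overlap_of_Em[OF m1, of ?i u "?i' - ?i"] iS SE lt by auto
    qed
    have "hd ?xs = 1" using x0 cpos by (metis hd_conv_nth len less_numeral_extra(3) list.size(3))
    moreover have "last ?xs = ?L - ?m + 1" using xl cpos l_def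
      by (metis last_conv_nth len less_numeral_extra(3) list.size(3))
    ultimately show "is_cluster p u S" using SE ne gap by (simp add: is_cluster_def Let_def)
  qed
qed


definition MPs :: "nat list \<Rightarrow> nat list \<Rightarrow> nat \<Rightarrow> nat set set" where
  "MPs p s j = {S. S \<subseteq> Em p s \<and> card S = j}"

definition CLs :: "nat list \<Rightarrow> nat list \<Rightarrow> nat \<Rightarrow> nat set set" where
  "CLs p s r = {S. is_cluster p s S \<and> card S = r}"

definition bnum :: "nat list \<Rightarrow> nat \<Rightarrow> nat \<Rightarrow> nat" where
  "bnum p n j = (\<Sum>s\<in>perms n. card (MPs p s j))"

definition fc :: "nat list \<Rightarrow> nat set \<Rightarrow> nat" where
  "fc p S = (LEAST c. 1 \<le> c \<and> clean p S c)"

lemma finite_MPs[simp]: "finite (MPs p s j)"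
  unfolding MPs_def by (rule finite_subset[of _ "Pow (Em p s)"]) auto

lemma finite_CLs[simp]: "finite (CLs p s r)"
  unfolding CLs_def is_cluster_def by (rule finite_subset[of _ "Pow (Em p s)"]) auto

lemma cluster_num_sum: "cluster_num p n r = (\<Sum>s\<in>perms n. card (CLs p s r))"
proof -
  have "{(s, S). is_perm n s \<and> is_cluster p s S \<and> card S = r} = Sigma (perms n) (\<lambda>s. CLs p s r)"
    by (auto simp: perms_def CLs_def)
  then show ?thesis by (simp add: cluster_num_def)
qed

lemma A0_card:
  assumes m: "length p \<ge> 2" and n: "length s \<ge> 1"
  shows "card {S \<in> MPs p s j. 1 \<notin> S} = card (MPs p (st (drop 1 s)) j)"
proof -
  have m1: "length p \<ge> 1" using m by simp
  let ?w = "st (drop 1 s)"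
  let ?f = "\<lambda>S2. (\<lambda>i::nat. 1 + i) ` S2"
  have inj: "inj (\<lambda>i::nat. 1 + i)" by (simp add: inj_def)
  have "bij_betw ?f (MPs p ?w j) {S \<in> MPs p s j. 1 \<notin> S}"
  proof (rule bij_betwI')
    fix X Y show "?f X = ?f Y \<longleftrightarrow> X = Y" by (rule inj_image_eq_iff[OF inj])
  next
    fix X assume X: "X \<in> MPs p ?w j"
    have XE: "X \<subseteq> Em p ?w" "card X = j" using X by (auto simp: MPs_def)
    have "?f X \<subseteq> Em p s"
    proof
      fix y assume "y \<in> ?f X"
      then obtain i where i: "i \<in> X" "y = 1 + i" by blast
      then have "i \<in> Em p ?w" using XE by blast
      then show "y \<in> Em p s" using Em_drop[OF m1 n, of i] i by simp
    qed
    moreover have "card (?f X) = j" using XE inj by (simp add: card_image inj_on_def)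
    moreover have "1 \<notin> ?f X"
    proof
      assume "1 \<in> ?f X"
      then obtain i where i: "i \<in> X" "1 = 1 + i" by blast
      then have "i \<in> Em p ?w" using XE by blast
      then show False using Em_drop[OF m1 n, of i] i by simp
    qed
    ultimately show "?f X \<in> {S \<in> MPs p s j. 1 \<notin> S}" by (simp add: MPs_def)
  next
    fix S assume S: "S \<in> {S \<in> MPs p s j. 1 \<notin> S}"
    define X where "X = {i. 1 + i \<in> S}"
    have ge: "x \<ge> 2" if xS: "x \<in> S" for x
    proof -
      have "x \<in> Em p s" "x \<noteq> 1" using S xS by (auto simp: MPs_def)
      then have "1 \<le> x" "x \<noteq> 1" using Em_bound(1)[OF m1] by auto
      then show ?thesis by linarith
    qed
    have SX: "S = ?f X"
    proof
      show "S \<subseteq> ?f X"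
      proof
        fix x assume "x \<in> S"
        then have "x = 1 + (x - 1)" "1 + (x - 1) \<in> S" using ge[of x] by auto
        then show "x \<in> ?f X" unfolding X_def by blast
      qed
    qed (auto simp: X_def)
    have "X \<subseteq> Em p ?w"
    proof
      fix i assume "i \<in> X"
      then have "1 + i \<in> S" by (simp add: X_def)
      then have "1 + i \<in> Em p s" "i \<ge> 1" using S ge[of "1 + i"] by (auto simp: MPs_def)
      then show "i \<in> Em p ?w" using Em_drop[OF m1 n, of i] by simp
    qed
    moreover have "card X = j"
    proof -
      have "card S = j" using S by (simp add: MPs_def)
      moreover have "card (?f X) = card X" using inj by (simp add: card_image inj_on_def)
      ultimately show ?thesis using SX by simp
    qed
    ultimately show "\<exists>X\<in>MPs p ?w j. S = ?f X" using SX by (auto simp: MPs_def)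
  qed
  from bij_betw_same_card[OF this] show ?thesis by simp
qed

lemma fc_props:
  assumes m: "length p \<ge> 2" and SE: "S \<subseteq> Em p s" and n: "length s \<ge> 1"
  shows "1 \<le> fc p S" "clean p S (fc p S)" "fc p S \<le> length s"
    "\<And>c. 1 \<le> c \<Longrightarrow> c < fc p S \<Longrightarrow> \<not> clean p S c"
proof -
  have m1: "length p \<ge> 1" using m by simp
  have cl: "clean p S (length s)" unfolding clean_def
  proof (intro ballI impI)
    fix i assume "i \<in> S" "i \<le> length s"
    then have "i \<in> Em p s" using SE by blast
    then show "i + length p - 1 \<le> length s" by (rule Em_bound(2)[OF m1])
  qed
  have ex: "1 \<le> length s \<and> clean p S (length s)" using n cl by simp
  have LI: "1 \<le> fc p S \<and> clean p S (fc p S)"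
    unfolding fc_def by (rule LeastI[of "\<lambda>c. 1 \<le> c \<and> clean p S c", OF ex])
  then show "1 \<le> fc p S" "clean p S (fc p S)" by simp_all
  show "fc p S \<le> length s" unfolding fc_def by (rule Least_le[of "\<lambda>c. 1 \<le> c \<and> clean p S c", OF ex])
  fix c assume "1 \<le> c" "c < fc p S"
  then show "\<not> clean p S c"
    using not_less_Least[of c "\<lambda>c. 1 \<le> c \<and> clean p S c"] unfolding fc_def by blast
qed


lemma split_rec:
  fixes L :: nat
  assumes "\<forall>i\<in>S1. i \<le> L" "\<forall>i\<in>S2. 1 \<le> i"
  shows "{i \<in> S1 \<union> (\<lambda>i. L + i) ` S2. i \<le> L} = S1"
    "{i. 1 \<le> i \<and> L + i \<in> S1 \<union> (\<lambda>i. L + i) ` S2} = S2"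
    "S1 \<inter> (\<lambda>i. L + i) ` S2 = {}"
proof -
  show "{i \<in> S1 \<union> (\<lambda>i. L + i) ` S2. i \<le> L} = S1" using assms by fastforce
  show "{i. 1 \<le> i \<and> L + i \<in> S1 \<union> (\<lambda>i. L + i) ` S2} = S2"
  proof
    show "{i. 1 \<le> i \<and> L + i \<in> S1 \<union> (\<lambda>i. L + i) ` S2} \<subseteq> S2"
    proof
      fix i assume "i \<in> {i. 1 \<le> i \<and> L + i \<in> S1 \<union> (\<lambda>i. L + i) ` S2}"
      then have "1 \<le> i" "L + i \<in> S1 \<union> (\<lambda>i. L + i) ` S2" by auto
      moreover have "L + i \<notin> S1" using assms(1) \<open>1 \<le> i\<close> by fastforce
      ultimately show "i \<in> S2" by auto
    qed
    show "S2 \<subseteq> {i. 1 \<le> i \<and> L + i \<in> S1 \<union> (\<lambda>i. L + i) ` S2}" using assms by auto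
  qed
  show "S1 \<inter> (\<lambda>i. L + i) ` S2 = {}" using assms by fastforce
qed

lemma AL_card:
  assumes m: "length p \<ge> 2" and L: "1 \<le> L" "L \<le> length s" and r: "r \<le> j"
  shows "card {S \<in> MPs p s j. 1 \<in> S \<and> fc p S = L \<and> card {i \<in> S. i \<le> L} = r}
         = card (CLs p (st (take L s)) r) * card (MPs p (st (drop L s)) (j - r))"
proof -
  have m1: "length p \<ge> 1" using m by simp
  let ?u = "st (take L s)" and ?w = "st (drop L s)"
  let ?A = "{S \<in> MPs p s j. 1 \<in> S \<and> fc p S = L \<and> card {i \<in> S. i \<le> L} = r}"
  let ?g = "\<lambda>(S1, S2). S1 \<union> (\<lambda>i::nat. L + i) ` S2"
  have lu: "length ?u = L" using L by simp
  have n1: "length s \<ge> 1" using L by simp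
  have inj: "inj (\<lambda>i::nat. L + i)" by (simp add: inj_def)
  have S1b: "1 \<le> i \<and> i + length p - 1 \<le> L" if "S1 \<in> CLs p ?u r" "i \<in> S1" for S1 i
  proof -
    have "i \<in> Em p ?u" using that by (auto simp: CLs_def is_cluster_def)
    then show ?thesis using Em_bound[OF m1, of i ?u] lu by simp
  qed
  have S2b: "1 \<le> i \<and> L + i \<in> Em p s" if "S2 \<in> MPs p ?w (j - r)" "i \<in> S2" for S2 i
  proof -
    have "i \<in> Em p ?w" using that by (auto simp: MPs_def)
    then show ?thesis using Em_drop[OF m1 L(2)] by blast
  qed
  have S1le: "i \<le> L" if "S1 \<in> CLs p ?u r" "i \<in> S1" for S1 i
    using S1b[OF that] m1 by linarith
  have S2ge: "1 \<le> i" if "S2 \<in> MPs p ?w (j - r)" "i \<in> S2" for S2 i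
    using S2b[OF that] by simp
  have SR: "{i \<in> S1 \<union> (\<lambda>i. L + i) ` S2. i \<le> L} = S1"
    "{i. 1 \<le> i \<and> L + i \<in> S1 \<union> (\<lambda>i. L + i) ` S2} = S2"
    "S1 \<inter> (\<lambda>i. L + i) ` S2 = {}"
    if "S1 \<in> CLs p ?u r" "S2 \<in> MPs p ?w (j - r)" for S1 S2
    using split_rec[of S1 L S2] S1le[OF that(1)] S2ge[OF that(2)] by blast+
  have bij: "bij_betw ?g (CLs p ?u r \<times> MPs p ?w (j - r)) ?A"
  proof (rule bij_betwI')
    fix x y assume x: "x \<in> CLs p ?u r \<times> MPs p ?w (j - r)" and y: "y \<in> CLs p ?u r \<times> MPs p ?w (j - r)"
    obtain S1 S2 where xx: "x = (S1, S2)" by (cases x)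
    obtain T1 T2 where yy: "y = (T1, T2)" by (cases y)
    have P: "S1 \<in> CLs p ?u r" "S2 \<in> MPs p ?w (j - r)" "T1 \<in> CLs p ?u r" "T2 \<in> MPs p ?w (j - r)"
      using x y xx yy by auto
    show "?g x = ?g y \<longleftrightarrow> x = y"
    proof
      assume eq: "?g x = ?g y"
      note rec1 = SR(1)[OF P(1,2)] and rec1' = SR(1)[OF P(3,4)]
      note rec2 = SR(2)[OF P(1,2)] and rec2' = SR(2)[OF P(3,4)]
      have "S1 = T1" using eq rec1 rec1' xx yy by simp
      moreover have "S2 = T2" using eq rec2 rec2' xx yy by simp
      ultimately show "x = y" using xx yy by simp
    qed simp
  next
    fix x assume x: "x \<in> CLs p ?u r \<times> MPs p ?w (j - r)"
    obtain S1 S2 where xx: "x = (S1, S2)" by (cases x)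
    have P: "S1 \<in> CLs p ?u r" "S2 \<in> MPs p ?w (j - r)" using x xx by auto
    define S where "S = S1 \<union> (\<lambda>i. L + i) ` S2"
    have cl1: "is_cluster p ?u S1" "card S1 = r" using P by (auto simp: CLs_def)
    have S1E: "S1 \<subseteq> Em p ?u" using cl1 by (simp add: is_cluster_def)
    note ch = cluster_char[OF m S1E, THEN iffD1, OF cl1(1)]
    have fin1: "finite S1" by (rule finite_subset[OF S1E finite_Em])
    have fin2: "finite S2" using P(2) finite_subset[OF _ finite_Em] by (auto simp: MPs_def)
    have "S \<subseteq> Em p s"
    proof
      fix i assume "i \<in> S"
      then consider "i \<in> S1" | i' where "i' \<in> S2" "i = L + i'" by (auto simp: S_def)
      then show "i \<in> Em p s"
      proof cases
        case 1
        then have "i \<in> Em p ?u" using S1E by blast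
        then show ?thesis using Em_take[OF m1 L(2), of i] S1b[OF P(1) 1] by simp
      next
        case 2
        then show ?thesis using S2b[OF P(2)] by simp
      qed
    qed
    moreover have "card S = j"
    proof -
      note disj = SR(3)[OF P]
      have "card S = card S1 + card ((\<lambda>i. L + i) ` S2)"
        unfolding S_def by (rule card_Un_disjoint) (use fin1 fin2 disj in auto)
      also have "card ((\<lambda>i. L + i) ` S2) = card S2" using inj by (simp add: card_image inj_on_def)
      finally show ?thesis using cl1 P(2) r by (simp add: MPs_def)
    qed
    moreover have "1 \<in> S" using ch by (simp add: S_def)
    moreover have low: "{i \<in> S. i \<le> L} = S1" using SR(1)[OF P] by (simp add: S_def)
    moreover have "fc p S = L"
    proof -
      have clL: "clean p S L" unfolding clean_def
      proof (intro ballI impI)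
        fix i assume "i \<in> S" "i \<le> L"
        then have "i \<in> S1" using low by blast
        then show "i + length p - 1 \<le> L" using S1b[OF P(1)] by blast
      qed
      have ncl: "\<not> clean p S c" if c: "1 \<le> c" "c < L" for c
      proof
        assume cS: "clean p S c"
        have "clean p S1 c" using cS by (auto simp: clean_def S_def)
        moreover have "c < length ?u" using c lu by simp
        ultimately show False using ch c(1) by blast
      qed
      show ?thesis unfolding fc_def
      proof (rule Least_equality)
        show "1 \<le> L \<and> clean p S L" using L clL by simp
        fix c assume "1 \<le> c \<and> clean p S c"
        then show "L \<le> c" using ncl not_le by blast
      qed
    qed
    ultimately show "?g x \<in> ?A" using xx cl1 by (simp add: S_def MPs_def)
  next
    fix S assume S: "S \<in> ?A"
    have SE: "S \<subseteq> Em p s" and cS: "card S = j" and one: "1 \<in> S" and fcL: "fc p S = L"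
      and cr: "card {i \<in> S. i \<le> L} = r" using S by (auto simp: MPs_def)
    note fp = fc_props[OF m SE n1, unfolded fcL]
    have finS: "finite S" by (rule finite_subset[OF SE finite_Em])
    define S1 where "S1 = {i \<in> S. i \<le> L}"
    define S2 where "S2 = {i. 1 \<le> i \<and> L + i \<in> S}"
    have Sdec: "S = S1 \<union> (\<lambda>i. L + i) ` S2"
    proof
      show "S \<subseteq> S1 \<union> (\<lambda>i. L + i) ` S2"
      proof
        fix x assume xS: "x \<in> S"
        show "x \<in> S1 \<union> (\<lambda>i. L + i) ` S2"
        proof (cases "x \<le> L")
          case True then show ?thesis using xS by (simp add: S1_def)
        next
          case False
          then have "x = L + (x - L)" "1 \<le> x - L" by auto
          then show ?thesis using xS unfolding S2_def by (metis (mono_tags, lifting) UnI2 image_eqI mem_Collect_eq)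
        qed
      qed
    qed (auto simp: S1_def S2_def)
    have S1b': "1 \<le> i \<and> i + length p - 1 \<le> L" if "i \<in> S1" for i
    proof -
      have "i \<in> S" "i \<le> L" using that by (auto simp: S1_def)
      moreover have "i \<in> Em p s" using \<open>i \<in> S\<close> SE by blast
      ultimately show ?thesis using fp(2) Em_bound(1)[OF m1] by (auto simp: clean_def)
    qed
    have S1E: "S1 \<subseteq> Em p ?u"
    proof
      fix i assume i: "i \<in> S1"
      then have "i \<in> Em p s" using SE by (auto simp: S1_def)
      then show "i \<in> Em p ?u" using Em_take[OF m1 L(2), of i] S1b'[OF i] by simp
    qed
    have "is_cluster p ?u S1"
    proof (rule cluster_char[OF m S1E, THEN iffD2], intro conjI allI impI)
      show "1 \<in> S1" using one L by (simp add: S1_def)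
      fix c assume c: "1 \<le> c \<and> c < length ?u"
      show "\<not> clean p S1 c"
      proof
        assume "clean p S1 c"
        then have "clean p S c" using c lu by (auto simp: clean_def S1_def)
        then show False using fp(4)[of c] c lu by simp
      qed
    qed
    moreover have "card S1 = r" using cr by (simp add: S1_def)
    moreover have S2E: "S2 \<subseteq> Em p ?w"
    proof
      fix i assume "i \<in> S2"
      then have "1 \<le> i" "L + i \<in> Em p s" using SE by (auto simp: S2_def)
      then show "i \<in> Em p ?w" using Em_drop[OF m1 L(2)] by blast
    qed
    moreover have "card S2 = j - r"
    proof -
      have fin1: "finite S1" using finS by (simp add: S1_def)
      have fin2: "finite S2" by (rule finite_subset[OF S2E finite_Em])
      have disj: "S1 \<inter> (\<lambda>i. L + i) ` S2 = {}" by (auto simp: S1_def S2_def)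
      have "card S = card S1 + card ((\<lambda>i. L + i) ` S2)"
        by (subst Sdec, rule card_Un_disjoint) (use fin1 fin2 disj in auto)
      also have "card ((\<lambda>i. L + i) ` S2) = card S2" using inj by (simp add: card_image inj_on_def)
      finally show ?thesis using cS \<open>card S1 = r\<close> by simp
    qed
    ultimately have "(S1, S2) \<in> CLs p ?u r \<times> MPs p ?w (j - r)" by (simp add: CLs_def MPs_def)
    then show "\<exists>x\<in>CLs p ?u r \<times> MPs p ?w (j - r). S = ?g x" using Sdec by force
  qed
  from bij_betw_same_card[OF this] have "card ?A = card (CLs p ?u r \<times> MPs p ?w (j - r))" by simp
  then show ?thesis by (simp add: card_cartesian_product)
qed


lemma decomp_card:
  assumes m: "length p \<ge> 2" and n: "length s \<ge> 1"
  shows "card (MPs p s j) = card {S \<in> MPs p s j. 1 \<notin> S} +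
    (\<Sum>L\<in>{1..length s}. \<Sum>r\<in>{1..j}. card {S \<in> MPs p s j. 1 \<in> S \<and> fc p S = L \<and> card {i \<in> S. i \<le> L} = r})"
proof -
  let ?M = "MPs p s j"
  define phi where "phi S = (if 1 \<in> S then Some (fc p S, card {i \<in> S. i \<le> fc p S}) else None)" for S
  define T where "T = insert None (Some ` ({1..length s} \<times> {1..j}))"
  have fT: "finite T" by (simp add: T_def)
  have img: "phi ` ?M \<subseteq> T"
  proof
    fix y assume "y \<in> phi ` ?M"
    then obtain S where S: "S \<in> ?M" "y = phi S" by blast
    show "y \<in> T"
    proof (cases "1 \<in> S")
      case True
      have SE: "S \<subseteq> Em p s" and cS: "card S = j" using S by (auto simp: MPs_def)
      have fS: "finite S" by (rule finite_subset[OF SE finite_Em])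
      note fp = fc_props[OF m SE n]
      have "1 \<in> {i \<in> S. i \<le> fc p S}" using True fp(1) by simp
      then have "card {i \<in> S. i \<le> fc p S} \<ge> 1" using fS
        by (metis (no_types, lifting) One_nat_def Suc_leI card_gt_0_iff empty_iff finite_subset mem_Collect_eq subsetI)
      moreover have "card {i \<in> S. i \<le> fc p S} \<le> j" using cS fS by (metis (no_types, lifting) card_mono mem_Collect_eq subsetI)
      ultimately show ?thesis using True fp(1,3) S(2) by (simp add: phi_def T_def)
    qed (simp add: phi_def T_def S(2))
  qed
  have "card ?M = (\<Sum>y\<in>T. card {S \<in> ?M. phi S = y})"
    unfolding card_eq_sum by (rule sum.group[OF finite_MPs fT img, symmetric])
  also have "\<dots> = card {S \<in> ?M. phi S = None} + (\<Sum>y\<in>Some ` ({1..length s} \<times> {1..j}). card {S \<in> ?M. phi S = y})"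
    unfolding T_def by (subst sum.insert) auto
  also have "(\<Sum>y\<in>Some ` ({1..length s} \<times> {1..j}). card {S \<in> ?M. phi S = y})
      = (\<Sum>x\<in>{1..length s} \<times> {1..j}. card {S \<in> ?M. phi S = Some x})"
    by (subst sum.reindex) (auto simp: inj_on_def)
  also have "\<dots> = (\<Sum>L\<in>{1..length s}. \<Sum>r\<in>{1..j}. card {S \<in> ?M. phi S = Some (L, r)})"
    by (simp add: sum.cartesian_product)
  also have "{S \<in> ?M. phi S = None} = {S \<in> ?M. 1 \<notin> S}" by (auto simp: phi_def)
  also have "(\<lambda>L r. {S \<in> ?M. phi S = Some (L, r)}) = (\<lambda>L r. {S \<in> ?M. 1 \<in> S \<and> fc p S = L \<and> card {i \<in> S. i \<le> L} = r})"
    by (auto simp: phi_def fun_eq_iff)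
  finally show ?thesis by simp
qed

lemma perms_1: "perms 1 = {[1]}"
proof -
  have "is_perm 1 u \<longleftrightarrow> u = [1]" for u
  proof
    assume "is_perm 1 u"
    then have "length u = 1" "set u = {1}" by (auto simp: is_perm_def)
    then show "u = [1]" by (metis One_nat_def length_0_conv length_Suc_conv list.set(1) list.simps(15) singleton_insert_inj_eq)
  qed (simp add: is_perm_def)
  then show ?thesis by (auto simp: perms_def)
qed

lemma card_perms_1[simp]: "card (perms (Suc 0)) = 1"
  using perms_1 by simp

lemma perms_0: "perms 0 = {[]}"
  by (auto simp: perms_def is_perm_def)

lemma bnum_rec:
  assumes m: "length p \<ge> 2" and n: "n \<ge> 1"
  shows "bnum p n j = n * bnum p (n - 1) j +
     (\<Sum>L\<in>{1..n}. \<Sum>r\<in>{1..j}. (n choose L) * (cluster_num p L r * bnum p (n - L) (j - r)))"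
proof -
  have len: "s \<in> perms n \<Longrightarrow> length s = n" for s by (simp add: perms_def is_perm_def)
  have "bnum p n j = (\<Sum>s\<in>perms n. card {S \<in> MPs p s j. 1 \<notin> S} +
    (\<Sum>L\<in>{1..n}. \<Sum>r\<in>{1..j}. card {S \<in> MPs p s j. 1 \<in> S \<and> fc p S = L \<and> card {i \<in> S. i \<le> L} = r}))"
    unfolding bnum_def using decomp_card[OF m] len n by (intro sum.cong) auto
  also have "\<dots> = (\<Sum>s\<in>perms n. 1 * card (MPs p (st (drop 1 s)) j)) +
    (\<Sum>s\<in>perms n. \<Sum>L\<in>{1..n}. \<Sum>r\<in>{1..j}. card (CLs p (st (take L s)) r) * card (MPs p (st (drop L s)) (j - r)))"
    unfolding sum.distrib
    using A0_card[OF m] AL_card[OF m] len n by (intro arg_cong2[where f = "(+)"] sum.cong) auto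
  also have "(\<Sum>s\<in>perms n. 1 * card (MPs p (st (drop 1 s)) j)) = n * bnum p (n - 1) j"
    using split_sum[of 1 n "\<lambda>_. 1" "\<lambda>w. card (MPs p w j)"] n by (simp add: perms_1 bnum_def)
  also have "(\<Sum>s\<in>perms n. \<Sum>L\<in>{1..n}. \<Sum>r\<in>{1..j}. card (CLs p (st (take L s)) r) * card (MPs p (st (drop L s)) (j - r)))
     = (\<Sum>L\<in>{1..n}. \<Sum>r\<in>{1..j}. \<Sum>s\<in>perms n. card (CLs p (st (take L s)) r) * card (MPs p (st (drop L s)) (j - r)))"
    by (subst sum.swap) (rule sum.cong[OF refl], rule sum.swap)
  also have "\<dots> = (\<Sum>L\<in>{1..n}. \<Sum>r\<in>{1..j}. (n choose L) * (cluster_num p L r * bnum p (n - L) (j - r)))"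
    by (intro sum.cong refl, subst split_sum) (auto simp: cluster_num_sum bnum_def)
  finally show ?thesis .
qed


lemma Em_short: "length p \<ge> 1 \<Longrightarrow> length s < length p \<Longrightarrow> Em p s = {}"
  using Em_bound by fastforce

lemma cluster_num_0: "length p \<ge> 2 \<Longrightarrow> cluster_num p 0 j = 0"
proof -
  assume m: "length p \<ge> 2"
  have "p \<noteq> []" using m by auto
  then have "Em p [] = {}" using Em_short[of p "[]"] m by simp
  then have "CLs p [] j = {}" by (auto simp: CLs_def is_cluster_def)
  then show ?thesis by (simp add: cluster_num_sum perms_0)
qed

lemma cluster_num_j0: "cluster_num p n 0 = 0"
proof -
  have "CLs p s 0 = {}" for s
  proof -
    have "card S \<noteq> 0" if "is_cluster p s S" for S
      using that finite_subset[OF _ finite_Em] by (auto simp: is_cluster_def)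
    then show ?thesis by (auto simp: CLs_def)
  qed
  then show ?thesis by (simp add: cluster_num_sum)
qed

lemma bnum_0: "length p \<ge> 1 \<Longrightarrow> bnum p 0 i = (if i = 0 then 1 else 0)"
proof -
  assume m: "length p \<ge> 1"
  have "p \<noteq> []" using m by auto
  then have "Em p [] = {}" using Em_short[OF m, of "[]"] by simp
  then have "MPs p [] i = (if i = 0 then {{}} else {})" by (auto simp: MPs_def)
  then show ?thesis by (simp add: bnum_def perms_0)
qed

lemma cl_eq:
  assumes mp: "length p \<ge> 2" and mt: "length t \<ge> 2"
    and b: "\<And>n j. bnum p n j = bnum t n j"
  shows "cluster_num p n j = cluster_num t n j"
proof (induction n arbitrary: j rule: less_induct)
  case (less n)
  show ?case
  proof (cases "n = 0 \<or> j = 0")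
    case True
    then show ?thesis using cluster_num_0[OF mp] cluster_num_0[OF mt] cluster_num_j0 by auto
  next
    case False
    then have n: "n \<ge> 1" and j: "j \<ge> 1" by auto
    have split: "(\<Sum>L\<in>{1..n}. \<Sum>r\<in>{1..j}. (n choose L) * (cluster_num q L r * bnum q (n - L) (j - r)))
       = (\<Sum>L\<in>{1..<n}. \<Sum>r\<in>{1..j}. (n choose L) * (cluster_num q L r * bnum q (n - L) (j - r)))
         + cluster_num q n j" if q: "length q \<ge> 2" for q
    proof -
      have "{1..n} = insert n {1..<n}" using n by auto
      then have "(\<Sum>L\<in>{1..n}. \<Sum>r\<in>{1..j}. (n choose L) * (cluster_num q L r * bnum q (n - L) (j - r)))
         = (\<Sum>r\<in>{1..j}. (n choose n) * (cluster_num q n r * bnum q (n - n) (j - r)))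
           + (\<Sum>L\<in>{1..<n}. \<Sum>r\<in>{1..j}. (n choose L) * (cluster_num q L r * bnum q (n - L) (j - r)))"
        by simp
      also have "(\<Sum>r\<in>{1..j}. (n choose n) * (cluster_num q n r * bnum q (n - n) (j - r)))
          = (\<Sum>r\<in>{1..j}. if r = j then cluster_num q n r else 0)"
        using bnum_0[of q] q by (intro sum.cong) auto
      also have "\<dots> = cluster_num q n j" using j by simp
      finally show ?thesis by simp
    qed
    have "(\<Sum>L\<in>{1..<n}. \<Sum>r\<in>{1..j}. (n choose L) * (cluster_num p L r * bnum p (n - L) (j - r)))
        = (\<Sum>L\<in>{1..<n}. \<Sum>r\<in>{1..j}. (n choose L) * (cluster_num t L r * bnum t (n - L) (j - r)))"
      using less.IH b by (intro sum.cong refl) auto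
    moreover have "n * bnum p (n - 1) j = n * bnum t (n - 1) j" using b by simp
    ultimately show ?thesis
      using bnum_rec[OF mp n, of j] bnum_rec[OF mt n, of j] split[OF mp] split[OF mt] b[of n j] b[of "n - 1" j]
      by linarith
  qed
qed

lemma bnum_occ:
  assumes m: "length p \<ge> 1"
  shows "bnum p n j = (\<Sum>k\<in>{..n}. occ_num p n k * (k choose j))"
proof -
  have cm: "card (MPs p s j) = card (Em p s) choose j" for s
    unfolding MPs_def by (rule n_subsets) simp
  have img: "(\<lambda>s. card (Em p s)) ` perms n \<subseteq> {..n}"
  proof
    fix y assume "y \<in> (\<lambda>s. card (Em p s)) ` perms n"
    then obtain s where s: "s \<in> perms n" "y = card (Em p s)" by blast
    have "card (Em p s) \<le> card {1..length s}" using Em_subset[OF m] by (rule card_mono[rotated]) simp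
    then show "y \<in> {..n}" using s by (simp add: perms_def is_perm_def)
  qed
  have "bnum p n j = (\<Sum>s\<in>perms n. card (Em p s) choose j)" by (simp add: bnum_def cm)
  also have "\<dots> = (\<Sum>k\<in>{..n}. \<Sum>s\<in>{s \<in> perms n. card (Em p s) = k}. card (Em p s) choose j)"
    by (rule sum.group[OF finite_perms _ img, symmetric]) simp
  also have "\<dots> = (\<Sum>k\<in>{..n}. occ_num p n k * (k choose j))"
  proof (rule sum.cong[OF refl])
    fix k
    have seteq: "{s \<in> perms n. card (Em p s) = k} = {s. is_perm n s \<and> card (Em p s) = k}"
      by (auto simp: perms_def)
    have "(\<Sum>s\<in>{s \<in> perms n. card (Em p s) = k}. card (Em p s) choose j)
        = (\<Sum>s\<in>{s \<in> perms n. card (Em p s) = k}. k choose j)" by (rule sum.cong) auto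
    also have "\<dots> = card {s \<in> perms n. card (Em p s) = k} * (k choose j)" by simp
    finally show "(\<Sum>s\<in>{s \<in> perms n. card (Em p s) = k}. card (Em p s) choose j) = occ_num p n k * (k choose j)"
      by (simp add: occ_num_def seteq)
  qed
  finally show ?thesis .
qed

lemma cwilf_cluster:
  assumes "length p \<ge> 2" "length t \<ge> 2" "strongly_cwilf_equiv p t"
  shows "cluster_num p n j = cluster_num t n j"
proof (rule cl_eq[OF assms(1,2)])
  fix n j
  show "bnum p n j = bnum t n j"
    using assms bnum_occ[of p n j] bnum_occ[of t n j] by (simp add: strongly_cwilf_equiv_def)
qed


lemma one_plus_pow_le_exp:
  assumes "k \<ge> 1"
  shows "(real k + 1) ^ k \<le> exp 1 * real k ^ k"
proof -
  have kp: "real k > 0" using assms by simp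
  have "1 + 1 / real k \<le> exp (1 / real k)" by (rule exp_ge_add_one_self)
  then have "(1 + 1 / real k) ^ k \<le> exp (1 / real k) ^ k"
    by (rule power_mono) (use kp in simp)
  also have "exp (1 / real k) ^ k = exp 1"
  proof -
    have "exp (real k * (1 / real k)) = exp (1 / real k) ^ k" by (rule exp_of_nat_mult)
    moreover have "real k * (1 / real k) = 1" using kp by simp
    ultimately show ?thesis by simp
  qed
  finally have h: "(1 + 1 / real k) ^ k \<le> exp 1" .
  have "(real k + 1) ^ k = real k ^ k * (1 + 1 / real k) ^ k"
    using kp by (simp add: power_mult_distrib[symmetric] field_simps)
  also have "\<dots> \<le> real k ^ k * exp 1" using h kp by (intro mult_left_mono) auto
  finally show ?thesis by (simp add: mult.commute)
qed

lemma pow_le_exp_fact: "real k ^ k \<le> exp (real k) * fact k"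
proof (induction k)
  case 0 then show ?case by simp
next
  case (Suc k)
  have h1: "(real k + 1) ^ k \<le> exp 1 * real k ^ k"
  proof (cases "k = 0")
    case True then show ?thesis by simp
  next
    case False then show ?thesis using one_plus_pow_le_exp[of k] by simp
  qed
  have "real (Suc k) ^ Suc k = (real k + 1) * (real k + 1) ^ k" by (simp add: add.commute)
  also have "\<dots> \<le> (real k + 1) * (exp 1 * real k ^ k)" using h1 by (intro mult_left_mono) auto
  also have "\<dots> \<le> (real k + 1) * (exp 1 * (exp (real k) * fact k))"
    using Suc.IH by (intro mult_left_mono) auto
  also have "\<dots> = exp (real (Suc k)) * fact (Suc k)"
    by (simp add: exp_add algebra_simps)
  finally show ?case .
qed

lemma asym:
  fixes M E :: nat
  shows "\<exists>K. \<forall>k\<ge>K. (1 + k * M) ^ (k * E) < fact k ^ (E + 1)"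
proof (intro exI allI impI)
  fix k :: nat
  assume kK: "k \<ge> 3 ^ (E + 1) * (M + 1) ^ E + 1"
  have k1: "k \<ge> 1" using kK by simp
  have kp: "real k > 0" using k1 by simp
  have e3: "exp (1::real) \<le> 3" by (rule exp_le)
  have "exp (1::real) ^ (E + 1) * real (M + 1) ^ E \<le> 3 ^ (E + 1) * real (M + 1) ^ E"
    using e3 by (intro mult_right_mono power_mono) auto
  also have "\<dots> < real k"
  proof -
    have "3 ^ (E + 1) * (M + 1) ^ E < k" using kK by simp
    then have "real (3 ^ (E + 1) * (M + 1) ^ E) < real k" by (simp only: of_nat_less_iff)
    then show ?thesis by simp
  qed
  finally have big: "exp 1 ^ (E + 1) * real (M + 1) ^ E < real k" .
  have A: "(real k * real (M + 1)) ^ E < (real k / exp 1) ^ (E + 1)"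
  proof -
    have "(real k * real (M + 1)) ^ E * exp 1 ^ (E + 1) = real k ^ E * (exp 1 ^ (E + 1) * real (M + 1) ^ E)"
      by (simp only: power_mult_distrib mult.assoc mult.commute[of "real (M + 1) ^ E"])
    also have "\<dots> < real k ^ E * real k" using big kp by (intro mult_strict_left_mono) auto
    also have "\<dots> = real k ^ (E + 1)" by simp
    finally have "(real k * real (M + 1)) ^ E * exp 1 ^ (E + 1) < real k ^ (E + 1)" .
    then show ?thesis by (simp add: power_divide field_simps)
  qed
  have "real ((1 + k * M) ^ (k * E)) \<le> (real k * real (M + 1)) ^ (k * E)"
  proof -
    have "real (1 + k * M) \<le> real k * real (M + 1)" using k1 by (simp add: algebra_simps)
    then show ?thesis by (simp add: power_mono)
  qed
  also have "\<dots> = ((real k * real (M + 1)) ^ E) ^ k" by (simp add: power_mult[symmetric] mult.commute)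
  also have "\<dots> < ((real k / exp 1) ^ (E + 1)) ^ k"
    using A k1 by (intro power_strict_mono) auto
  also have "\<dots> = ((real k / exp 1) ^ k) ^ (E + 1)" unfolding power_mult[symmetric] by (simp only: mult.commute)
  also have "\<dots> \<le> (fact k) ^ (E + 1)"
  proof -
    have "(real k / exp 1) ^ k = real k ^ k / exp (real k)"
      by (simp add: power_divide exp_of_nat_mult[symmetric])
    also have "\<dots> \<le> fact k" using pow_le_exp_fact[of k] by (simp add: divide_le_eq mult.commute)
    finally show ?thesis by (intro power_mono) auto
  qed
  finally show "(1 + k * M) ^ (k * E) < fact k ^ (E + 1)"
    by (metis of_nat_fact of_nat_less_iff of_nat_power)
qed


definition Xs :: "nat list \<Rightarrow> nat \<Rightarrow> nat list set" where
  "Xs p k = {s. is_perm (1 + k * (length p - 1)) s \<and>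
      (\<forall>i<k. st (take (length p) (drop (i * (length p - 1)) s)) = p)}"

lemma st_single: "st [x] = [1]"
proof -
  have "{y \<in> set [x]. y \<le> x} = {x}" by auto
  then show ?thesis by (simp add: st_def)
qed

lemma overlap_last:
  assumes "length p \<ge> 2" shows "length p - 1 \<in> overlaps p"
proof -
  have "drop (length p - 1) p = [p ! (length p - 1)]"
    using Cons_nth_drop_Suc[of "length p - 1" p] assms by simp
  moreover have "take (length p - (length p - 1)) p = [p ! 0]"
    using assms by (cases p) auto
  ultimately show ?thesis using assms by (auto simp: overlaps_def st_single)
qed

lemma chain_positions:
  fixes xs :: "nat list" and M k :: nat
  assumes len: "length xs = k" and k: "k \<ge> 1"
    and x0: "xs ! 0 = 1" and xl: "xs ! (k - 1) = 1 + (k - 1) * M"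
    and gap: "\<And>j. j + 1 < k \<Longrightarrow> xs ! (j + 1) \<le> xs ! j + M"
  shows "\<And>j. j < k \<Longrightarrow> xs ! j = 1 + j * M"
proof -
  have step: "xs ! (j + d) \<le> xs ! j + d * M" if "j + d < k" for j d
    using that
  proof (induction d)
    case 0 then show ?case by simp
  next
    case (Suc d)
    then have "xs ! (j + d) \<le> xs ! j + d * M" by simp
    moreover have "xs ! (j + d + 1) \<le> xs ! (j + d) + M" using gap Suc.prems by simp
    ultimately show ?case by simp
  qed
  fix j assume j: "j < k"
  have "xs ! j \<le> 1 + j * M" using step[of 0 j] j x0 by simp
  moreover have "1 + (k - 1) * M \<le> xs ! j + (k - 1 - j) * M"
    using step[of j "k - 1 - j"] j xl by simp
  then have "1 + j * M \<le> xs ! j"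
  proof -
    have "(k - 1) * M = j * M + (k - 1 - j) * M" using j by (simp add: add_mult_distrib[symmetric])
    then show ?thesis using \<open>1 + (k - 1) * M \<le> xs ! j + (k - 1 - j) * M\<close> by linarith
  qed
  ultimately show "xs ! j = 1 + j * M" by simp
qed

lemma cluster_chain:
  assumes m: "length p = Suc M" "M \<ge> 1" and k: "k \<ge> 1"
  shows "cluster_num p (1 + k * M) k = card (Xs p k)"
proof -
  let ?n = "1 + k * M"
  define S0 where "S0 = (\<lambda>i. 1 + i * M) ` {..<k}"
  have m2: "length p \<ge> 2" and m1: "length p \<ge> 1" using m by auto
  have injf: "inj_on (\<lambda>i. 1 + i * M) A" for A using m by (auto simp: inj_on_def)
  have cS0: "card S0 = k" using injf by (simp add: S0_def card_image)
  have nm: "?n - length p + 1 = 1 + (k - 1) * M" using m k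
    by (cases k) (auto simp: algebra_simps)
  have "{(s, S). is_perm ?n s \<and> is_cluster p s S \<and> card S = k} = (\<lambda>s. (s, S0)) ` Xs p k"
  proof
    show "{(s, S). is_perm ?n s \<and> is_cluster p s S \<and> card S = k} \<subseteq> (\<lambda>s. (s, S0)) ` Xs p k"
    proof
      fix x assume "x \<in> {(s, S). is_perm ?n s \<and> is_cluster p s S \<and> card S = k}"
      then obtain s S where xx: "x = (s, S)" and s: "is_perm ?n s" and cl: "is_cluster p s S" and cS: "card S = k"
        by blast
      let ?xs = "sorted_list_of_set S"
      have SE: "S \<subseteq> Em p s" and ne: "S \<noteq> {}" using cl by (auto simp: is_cluster_def)
      have fS: "finite S" by (rule finite_subset[OF SE finite_Em])
      have ls: "length s = ?n" using s by (simp add: is_perm_def)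
      have len: "length ?xs = k" using cS by simp
      have xne: "?xs \<noteq> []"
      proof
        assume "?xs = []" then have "length ?xs = 0" by simp
        then show False using len k by simp
      qed
      have x0: "?xs ! 0 = 1" using cl hd_conv_nth[OF xne]
        by (simp add: is_cluster_def Let_def)
      have xl: "?xs ! (k - 1) = 1 + (k - 1) * M" using cl last_conv_nth[OF xne] len ls nm
        by (simp add: is_cluster_def Let_def)
      have gap: "?xs ! (j + 1) \<le> ?xs ! j + M" if "j + 1 < k" for j
      proof -
        have "?xs ! (j + 1) - ?xs ! j \<in> overlaps p" using cl that len by (auto simp: is_cluster_def Let_def)
        then have "?xs ! (j + 1) - ?xs ! j \<le> M" using m by (simp add: overlaps_def)
        then show ?thesis by linarith
      qed
      note cp = chain_positions[OF len k x0 xl gap]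
      have "S = set ?xs" using fS by simp
      also have "\<dots> = (\<lambda>j. ?xs ! j) ` {..<k}" using len by (auto simp: in_set_conv_nth)
      also have "\<dots> = S0" using cp by (auto simp: S0_def)
      finally have SS0: "S = S0" .
      have "s \<in> Xs p k"
      proof -
        have "st (take (length p) (drop (i * (length p - 1)) s)) = p" if "i < k" for i
        proof -
          have "1 + i * M \<in> S" using SS0 that by (auto simp: S0_def)
          then have "1 + i * M \<in> Em p s" using SE by blast
          then show ?thesis using Em_iff[OF m1] m by simp
        qed
        then show ?thesis using s m by (simp add: Xs_def)
      qed
      then show "x \<in> (\<lambda>s. (s, S0)) ` Xs p k" using SS0 xx by blast
    qed
  next
    show "(\<lambda>s. (s, S0)) ` Xs p k \<subseteq> {(s, S). is_perm ?n s \<and> is_cluster p s S \<and> card S = k}"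
    proof clarify
      fix s assume s: "s \<in> Xs p k"
      have ps: "is_perm ?n s" using s m by (simp add: Xs_def)
      have ls: "length s = ?n" using ps by (simp add: is_perm_def)
      have win: "st (take (length p) (drop (i * M) s)) = p" if "i < k" for i
        using s that m by (simp add: Xs_def)
      have SE: "S0 \<subseteq> Em p s"
      proof
        fix x assume "x \<in> S0"
        then obtain i where i: "i < k" "x = 1 + i * M" by (auto simp: S0_def)
        have "(i + 1) * M \<le> k * M" using i by (intro mult_right_mono) auto
        then have "x + length p - 1 \<le> length s" using i m ls by (simp add: algebra_simps)
        then show "x \<in> Em p s" using Em_iff[OF m1] win[OF i(1)] i by simp
      qed
      define ys where "ys = map (\<lambda>i. 1 + i * M) [0..<k]"
      have sw: "sorted_wrt (<) ys"
        unfolding ys_def sorted_wrt_iff_nth_less using m by auto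
      have sl: "sorted_list_of_set S0 = ys"
      proof -
        have "S0 = set ys" by (simp add: S0_def ys_def atLeast0LessThan)
        then show ?thesis using sw by (simp add: sorted_list_of_set.idem_if_sorted_distinct strict_sorted_iff)
      qed
      have "hd ys = 1" using k by (simp add: ys_def hd_map)
      moreover have "last ys = ?n - length p + 1" using k nm by (simp add: ys_def last_map)
      moreover have "\<forall>j. j + 1 < length ys \<longrightarrow> ys ! (j + 1) - ys ! j \<in> overlaps p"
        using overlap_last[OF m2] m by (auto simp: ys_def)
      moreover have "S0 \<noteq> {}" using cS0 k by auto
      ultimately have "is_cluster p s S0" using SE sl by (simp add: is_cluster_def Let_def ls)
      then show "is_perm ?n s \<and> is_cluster p s S0 \<and> card S0 = k" using ps cS0 by simp
    qed
  qed
  moreover have "inj_on (\<lambda>s. (s, S0)) (Xs p k)" by (auto simp: inj_on_def)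
  ultimately show ?thesis by (simp add: cluster_num_def card_image)
qed


lemma card_pos_filter:
  assumes "is_perm m p"
  shows "card {j. j < m \<and> P (p ! j)} = card {v \<in> {1..m}. P v}"
  using card_set_filter_nth[of p P] assms by (simp add: is_perm_def)

lemma card_out:
  assumes "1 \<le> a" "a \<le> b" "b \<le> m"
  shows "card {v \<in> {1..m}. v < a \<or> v > b} = (a - 1) + (m - b)"
proof -
  have "{v \<in> {1..m}. v < a \<or> v > b} = {1..<a} \<union> {b<..m}" using assms by auto
  moreover have "{1..<a} \<inter> {b<..m} = {}" using assms by auto
  ultimately show ?thesis by (simp add: card_Un_disjoint)
qed

lemma rank_inj:
  fixes V :: "nat set"
  assumes "finite V" "v \<in> V" "w \<in> V" "card {x \<in> V. x < v} = card {x \<in> V. x < w}"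
  shows "v = w"
proof (rule ccontr)
  assume "v \<noteq> w"
  then have "v < w \<or> w < v" by arith
  then show False
  proof
    assume vw: "v < w"
    have "{x \<in> V. x < v} \<subset> {x \<in> V. x < w}" using vw assms by auto
    then have "card {x \<in> V. x < v} < card {x \<in> V. x < w}" using assms(1) by (intro psubset_card_mono) auto
    then show False using assms by simp
  next
    assume vw: "w < v"
    have "{x \<in> V. x < w} \<subset> {x \<in> V. x < v}" using vw assms by auto
    then have "card {x \<in> V. x < w} < card {x \<in> V. x < v}" using assms(1) by (intro psubset_card_mono) auto
    then show False using assms by simp
  qed
qed

lemma perm_det:
  assumes s: "is_perm n s" and s': "is_perm n s'" and C: "C \<subseteq> {..<n}"
    and off: "\<And>q. q < n \<Longrightarrow> q \<notin> C \<Longrightarrow> s ! q = s' ! q"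
    and ord: "\<And>q q'. q \<in> C \<Longrightarrow> q' \<in> C \<Longrightarrow> s ! q < s ! q' \<longleftrightarrow> s' ! q < s' ! q'"
  shows "s = s'"
proof -
  have ls: "length s = n" "length s' = n" using s s' by (auto simp: is_perm_def)
  have ds: "distinct s" "distinct s'" using s s' by (auto simp: is_perm_def)
  have injs: "inj_on (nth s) {..<n}" "inj_on (nth s') {..<n}"
    using ds ls by (auto simp: inj_on_def nth_eq_iff_index_eq)
  have ims: "nth s ` {..<n} = {1..n}" "nth s' ` {..<n} = {1..n}"
    using s s' ls by (auto simp: is_perm_def set_conv_nth)
  define V where "V = nth s ` C"
  have CC: "{..<n} - ({..<n} - C) = C" using C by blast
  have V1: "V = {1..n} - nth s ` ({..<n} - C)"
    using inj_on_image_set_diff[OF injs(1), of "{..<n}" "{..<n} - C"] CC ims(1) C unfolding V_def by simp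
  have V2: "nth s' ` C = {1..n} - nth s' ` ({..<n} - C)"
    using inj_on_image_set_diff[OF injs(2), of "{..<n}" "{..<n} - C"] CC ims(2) C by simp
  have "nth s ` ({..<n} - C) = nth s' ` ({..<n} - C)" using off by (intro image_cong) auto
  then have VV: "nth s' ` C = V" using V1 V2 by simp
  have fV: "finite V" by (simp add: V_def finite_subset[OF C])
  have rank: "card {x \<in> V. x < t ! q} = card {q' \<in> C. t ! q' < t ! q}"
    if t: "t = s \<or> t = s'" "nth t ` C = V" and q: "q \<in> C" for t q
  proof -
    have it: "inj_on (nth t) C" using t injs C inj_on_subset by blast
    have "{x \<in> V. x < t ! q} = nth t ` {q' \<in> C. t ! q' < t ! q}" using t(2) by auto
    then show ?thesis using it by (simp add: card_image inj_on_subset)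
  qed
  show ?thesis
  proof (rule nth_equalityI)
    show "length s = length s'" using ls by simp
    fix q assume "q < length s"
    then have q: "q < n" using ls by simp
    show "s ! q = s' ! q"
    proof (cases "q \<in> C")
      case False then show ?thesis using off q by simp
    next
      case True
      have "card {x \<in> V. x < s ! q} = card {q' \<in> C. s ! q' < s ! q}"
        using rank[of s q] True by (simp add: V_def)
      also have "\<dots> = card {q' \<in> C. s' ! q' < s' ! q}"
        using ord True by (intro arg_cong[where f = card]) blast
      also have "\<dots> = card {x \<in> V. x < s' ! q}" using rank[of s' q] True VV by simp
      finally have eqc: "card {x \<in> V. x < s ! q} = card {x \<in> V. x < s' ! q}" .
      have m1: "s ! q \<in> V" using True by (simp add: V_def)
      have m2: "s' ! q \<in> V" using True VV by blast
      show ?thesis by (rule rank_inj[OF fV m1 m2 eqc])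
    qed
  qed
qed


context
  fixes p :: "nat list" and M k :: nat
  assumes lp: "length p = Suc M" and M1: "M \<ge> 1" and pp: "is_perm (Suc M) p"
    and ab: "p ! 0 < p ! M"
begin

lemma W:
  assumes s: "s \<in> Xs p k" and i: "i < k" and j: "j \<le> M" "j' \<le> M"
  shows "s ! (i * M + j) < s ! (i * M + j') \<longleftrightarrow> p ! j < p ! j'"
proof -
  define w where "w = take (Suc M) (drop (i * M) s)"
  have ls: "length s = 1 + k * M" using s lp by (simp add: Xs_def is_perm_def)
  have "(i + 1) * M \<le> k * M" using i by (intro mult_right_mono) auto
  then have lw: "length w = Suc M" using ls by (simp add: w_def algebra_simps)
  have stw: "st w = p" using s i lp by (simp add: Xs_def w_def)
  have wn: "w ! x = s ! (i * M + x)" if "x \<le> M" for x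
    using that lw by (simp add: w_def nth_take nth_drop)
  have "w ! j < w ! j' \<longleftrightarrow> st w ! j < st w ! j'" using st_nth_less[of j w j'] j lw by simp
  then show ?thesis using stw wn j by simp
qed

lemma Xmono:
  assumes s: "s \<in> Xs p k" and ii: "i \<le> i'" "i' \<le> k"
  shows "s ! (i * M) \<le> s ! (i' * M)"
  using ii
proof (induction i' rule: dec_induct)
  case base then show ?case by simp
next
  case (step i')
  have "s ! (i' * M + 0) < s ! (i' * M + M)" using W[OF s, of i' 0 M] step ab by simp
  then show ?case using step by (simp add: algebra_simps)
qed

definition Cset :: "nat set" where
  "Cset = {q. q < 1 + k * M \<and> p ! 0 \<le> p ! (q mod M) \<and> p ! (q mod M) < p ! M}"

lemma q_decomp: "q = (q div M) * M + q mod M" by simp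

lemma Cbounds:
  assumes s: "s \<in> Xs p k" and q: "q \<in> Cset" and i: "q div M < k"
  shows "s ! ((q div M) * M) \<le> s ! q \<and> s ! q < s ! ((q div M + 1) * M)"
proof -
  let ?i = "q div M" and ?j = "q mod M"
  have j: "?j < M" using M1 by simp
  have qc: "p ! 0 \<le> p ! ?j" "p ! ?j < p ! M" using q by (auto simp: Cset_def)
  have dp: "distinct p" using pp by (simp add: is_perm_def)
  have "s ! (?i * M + 0) \<le> s ! (?i * M + ?j)"
  proof (cases "?j = 0")
    case True then show ?thesis by simp
  next
    case False
    then have "p ! 0 \<noteq> p ! ?j" using dp lp j by (simp add: nth_eq_iff_index_eq)
    then have "p ! 0 < p ! ?j" using qc by simp
    then show ?thesis using W[OF s i, of 0 ?j] j by simp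
  qed
  moreover have "s ! (?i * M + ?j) < s ! (?i * M + M)" using W[OF s i, of ?j M] j qc by simp
  ultimately show ?thesis by (simp add: algebra_simps)
qed

lemma Clast:
  assumes q: "q < 1 + k * M" "\<not> q div M < k"
  shows "q = k * M"
proof -
  have "k * M \<le> (q div M) * M" using q(2) by (intro mult_right_mono) auto
  moreover have "(q div M) * M \<le> q" by (rule div_times_less_eq_dividend)
  ultimately show ?thesis using q(1) by linarith
qed

lemma div_le_k: "q < 1 + k * M \<Longrightarrow> q div M \<le> k"
proof -
  assume "q < 1 + k * M"
  then have "q div M \<le> (k * M) div M" by (intro div_le_mono) simp
  then show ?thesis using M1 by simp
qed

lemma ORD:
  assumes s: "s \<in> Xs p k" and q: "q \<in> Cset" and q': "q' \<in> Cset"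
  shows "s ! q < s ! q' \<longleftrightarrow>
     (q div M < q' div M \<or> (q div M = q' div M \<and> p ! (q mod M) < p ! (q' mod M)))"
proof -
  let ?i = "q div M" and ?i' = "q' div M"
  have qn: "q < 1 + k * M" "q' < 1 + k * M" using q q' by (auto simp: Cset_def)
  have ik: "?i \<le> k" "?i' \<le> k" using div_le_k qn by auto
  have lo: "s ! (?i * M) \<le> s ! q"
  proof (cases "?i < k")
    case True then show ?thesis using Cbounds[OF s q] by simp
  next
    case False then have "q = k * M" using Clast qn by blast
    then show ?thesis using M1 by simp
  qed
  have lo': "s ! (?i' * M) \<le> s ! q'"
  proof (cases "?i' < k")
    case True then show ?thesis using Cbounds[OF s q'] by simp
  next
    case False then have "q' = k * M" using Clast qn by blast
    then show ?thesis using M1 by simp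
  qed
  have hi: "s ! q < s ! ((?i + 1) * M)" if "?i < k" using Cbounds[OF s q that] by simp
  have hi': "s ! q' < s ! ((?i' + 1) * M)" if "?i' < k" using Cbounds[OF s q' that] by simp
  consider "?i < ?i'" | "?i' < ?i" | "?i = ?i'" by arith
  then show ?thesis
  proof cases
    case 1
    then have a1: "?i < k" using ik by linarith
    have "s ! ((?i + 1) * M) \<le> s ! (?i' * M)" using Xmono[OF s, of "?i + 1" ?i'] 1 ik by simp
    then have "s ! q < s ! q'" using hi[OF a1] lo' by linarith
    then show ?thesis using 1 by simp
  next
    case 2
    then have a1: "?i' < k" using ik by linarith
    have "s ! ((?i' + 1) * M) \<le> s ! (?i * M)" using Xmono[OF s, of "?i' + 1" ?i] 2 ik by simp
    then have "s ! q' < s ! q" using hi'[OF a1] lo by linarith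
    then show ?thesis using 2 by simp
  next
    case 3
    show ?thesis
    proof (cases "?i < k")
      case True
      have "s ! (?i * M + q mod M) < s ! (?i * M + q' mod M) \<longleftrightarrow> p ! (q mod M) < p ! (q' mod M)"
        using W[OF s True, of "q mod M" "q' mod M"] M1 by (simp add: less_imp_le)
      moreover have "?i * M + q mod M = q" by simp
      moreover have "?i * M + q' mod M = q'" using 3 by (metis div_mult_mod_eq)
      ultimately show ?thesis using 3 by simp
    next
      case False
      then have "q = k * M" "q' = k * M" using Clast qn 3 by auto
      then show ?thesis by simp
    qed
  qed
qed

lemma card_J:
  "card {j. j < M \<and> \<not> (p ! 0 \<le> p ! j \<and> p ! j < p ! M)} = (p ! 0 - 1) + (Suc M - p ! M)"
proof -
  have dp: "distinct p" and sp: "set p = {1..Suc M}" using pp by (auto simp: is_perm_def)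
  have "{j. j < M \<and> \<not> (p ! 0 \<le> p ! j \<and> p ! j < p ! M)} = {j. j < Suc M \<and> (p ! j < p ! 0 \<or> p ! j > p ! M)}"
  proof (intro Collect_cong iffI)
    fix j assume h: "j < M \<and> \<not> (p ! 0 \<le> p ! j \<and> p ! j < p ! M)"
    then have "p ! j \<noteq> p ! M" using dp lp by (simp add: nth_eq_iff_index_eq)
    then show "j < Suc M \<and> (p ! j < p ! 0 \<or> p ! j > p ! M)" using h by auto
  next
    fix j assume h: "j < Suc M \<and> (p ! j < p ! 0 \<or> p ! j > p ! M)"
    then have "j \<noteq> M" using ab by auto
    then show "j < M \<and> \<not> (p ! 0 \<le> p ! j \<and> p ! j < p ! M)" using h by auto
  qed
  also have "card \<dots> = card {v \<in> {1..Suc M}. v < p ! 0 \<or> v > p ! M}"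
    by (rule card_pos_filter[OF pp])
  also have "\<dots> = (p ! 0 - 1) + (Suc M - p ! M)"
  proof (rule card_out)
    have "p ! 0 \<in> set p" "p ! M \<in> set p" using lp by auto
    then show "1 \<le> p ! 0" "p ! M \<le> Suc M" using sp by auto
    show "p ! 0 \<le> p ! M" using ab by simp
  qed
  finally show ?thesis .
qed

lemma upper:
  "card (Xs p k) \<le> (1 + k * M) ^ (k * ((p ! 0 - 1) + (Suc M - p ! M)))"
proof -
  let ?n = "1 + k * M"
  define NC where "NC = {q. q < ?n \<and> q \<notin> Cset}"
  define J where "J = {j. j < M \<and> \<not> (p ! 0 \<le> p ! j \<and> p ! j < p ! M)}"
  define Phi where "Phi s = restrict (\<lambda>q. s ! q) NC" for s :: "nat list"
  have Cn: "Cset \<subseteq> {..<?n}" by (auto simp: Cset_def)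
  have inj: "inj_on Phi (Xs p k)"
  proof (rule inj_onI)
    fix s s' assume s: "s \<in> Xs p k" and s': "s' \<in> Xs p k" and eq: "Phi s = Phi s'"
    have ps: "is_perm ?n s" "is_perm ?n s'" using s s' lp by (auto simp: Xs_def)
    show "s = s'"
    proof (rule perm_det[OF ps Cn])
      fix q assume "q < ?n" "q \<notin> Cset"
      then have "q \<in> NC" by (simp add: NC_def)
      then show "s ! q = s' ! q" using eq unfolding Phi_def by (metis restrict_apply')
    next
      fix q q' assume "q \<in> Cset" "q' \<in> Cset"
      then show "s ! q < s ! q' \<longleftrightarrow> s' ! q < s' ! q'" using ORD[OF s] ORD[OF s'] by simp
    qed
  qed
  have img: "Phi ` Xs p k \<subseteq> PiE NC (\<lambda>_. {1..?n})"
  proof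
    fix f assume "f \<in> Phi ` Xs p k"
    then obtain s where s: "s \<in> Xs p k" "f = Phi s" by blast
    have ps: "is_perm ?n s" using s lp by (auto simp: Xs_def)
    have "s ! q \<in> {1..?n}" if "q \<in> NC" for q
    proof -
      have "q < length s" using that ps by (simp add: NC_def is_perm_def)
      then have "s ! q \<in> set s" by simp
      then show ?thesis using ps by (simp add: is_perm_def)
    qed
    then show "f \<in> PiE NC (\<lambda>_. {1..?n})" using s by (simp add: Phi_def)
  qed
  have fNC: "finite NC" by (simp add: NC_def)
  have "card (Xs p k) = card (Phi ` Xs p k)" using inj by (simp add: card_image)
  also have "\<dots> \<le> card (PiE NC (\<lambda>_. {1..?n}))"
    by (rule card_mono[OF _ img]) (simp add: finite_PiE fNC)
  also have "\<dots> = ?n ^ card NC" using fNC by (simp add: card_PiE)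
  also have "\<dots> \<le> ?n ^ (k * card J)"
  proof (rule power_increasing)
    have "NC \<subseteq> (\<lambda>(i, j). i * M + j) ` ({..<k} \<times> J)"
    proof
      fix q assume q: "q \<in> NC"
      then have qn: "q < ?n" and qc: "q \<notin> Cset" by (auto simp: NC_def)
      have ik: "q div M < k"
      proof (rule ccontr)
        assume "\<not> q div M < k"
        then have "q = k * M" using Clast qn by blast
        then have "q \<in> Cset" using ab by (simp add: Cset_def)
        then show False using qc by simp
      qed
      have "q mod M \<in> J" using qc qn M1 by (simp add: J_def Cset_def)
      then show "q \<in> (\<lambda>(i, j). i * M + j) ` ({..<k} \<times> J)"
        using ik by (intro image_eqI[of _ _ "(q div M, q mod M)"]) auto
    qed
    then have "card NC \<le> card ((\<lambda>(i, j). i * M + j) ` ({..<k} \<times> J))"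
      by (rule card_mono[rotated]) (simp add: J_def)
    also have "\<dots> \<le> card ({..<k} \<times> J)" by (rule card_image_le) (simp add: J_def)
    also have "\<dots> = k * card J" by (simp add: card_cartesian_product)
    finally show "card NC \<le> k * card J" .
  qed simp
  finally show ?thesis using card_J by (simp add: J_def)
qed

end


lemma lin_less:
  fixes c c' x y k :: nat
  assumes "x < k" "c < c'"
  shows "c * k + x < c' * k + y"
proof -
  have "c * k + x < c * k + k" using assms by simp
  also have "\<dots> = (c + 1) * k" by simp
  also have "\<dots> \<le> c' * k" using assms by (intro mult_right_mono) auto
  finally show ?thesis by simp
qed

lemma lin_eq:
  fixes c c' x y k :: nat
  assumes "x < k" "y < k" "c * k + x = c' * k + y"
  shows "c = c' \<and> x = y"
proof -
  have "c = c'"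
  proof (rule ccontr)
    assume "c \<noteq> c'"
    then have "c < c' \<or> c' < c" by arith
    then show False using lin_less[OF assms(1), of c c' y] lin_less[OF assms(2), of c' c x] assms(3) by auto
  qed
  then show ?thesis using assms by simp
qed

context
  fixes t :: "nat list" and M k :: nat
  assumes lt: "length t = Suc M" and M1: "M \<ge> 1" and pt: "is_perm (Suc M) t"
    and ab: "t ! 0 < t ! M"
begin

definition Rset :: "nat set" where
  "Rset = {v \<in> {1..Suc M}. v < t ! 0 \<or> v > t ! M}"

definition Fam :: "(nat \<Rightarrow> nat \<Rightarrow> nat) set" where
  "Fam = PiE Rset (\<lambda>_. {f. f permutes {..<k}})"

definition hv :: "(nat \<Rightarrow> nat \<Rightarrow> nat) \<Rightarrow> nat \<Rightarrow> nat \<Rightarrow> nat" where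
  "hv sg i v = (if v < t ! 0 then (v - 1) * k + sg v i + 1
      else if v \<le> t ! M then k * (t ! 0 - 1) + 1 + i * (t ! M - t ! 0) + (v - t ! 0)
      else k * (t ! 0 - 1) + 1 + k * (t ! M - t ! 0) + (v - t ! M - 1) * k + sg v i + 1)"

definition gv :: "(nat \<Rightarrow> nat \<Rightarrow> nat) \<Rightarrow> nat \<Rightarrow> nat" where
  "gv sg q = hv sg (q div M) (t ! (q mod M))"

definition slist :: "(nat \<Rightarrow> nat \<Rightarrow> nat) \<Rightarrow> nat list" where
  "slist sg = map (gv sg) [0..<1 + k * M]"

lemma t_facts: "distinct t" "set t = {1..Suc M}" "1 \<le> t ! 0" "t ! M \<le> Suc M"
proof -
  show dt: "distinct t" "set t = {1..Suc M}" using pt by (auto simp: is_perm_def)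
  have "t ! 0 \<in> set t" "t ! M \<in> set t" using lt by auto
  then show "1 \<le> t ! 0" "t ! M \<le> Suc M" using dt by auto
qed

lemma sum_M: "(t ! 0 - 1) + (t ! M - t ! 0) + (Suc M - t ! M) = M"
  using t_facts ab by linarith

lemma tj_ne_b: "j < M \<Longrightarrow> t ! j \<noteq> t ! M"
  using t_facts(1) lt by (simp add: nth_eq_iff_index_eq)

lemma tj_range: "j < Suc M \<Longrightarrow> t ! j \<in> {1..Suc M}"
  using t_facts(2) lt by (metis nth_mem)

lemma sg_bound:
  assumes "sg \<in> Fam" "v \<in> Rset" "i < k" shows "sg v i < k"
proof -
  have "sg v permutes {..<k}" using assms by (auto simp: Fam_def)
  then show ?thesis using permutes_in_image[of "sg v" "{..<k}" i] assms(3) by simp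
qed

lemma gv_window:
  assumes i: "i < k" and j: "j \<le> M"
  shows "gv sg (i * M + j) = hv sg i (t ! j)"
proof (cases "j = M")
  case True
  have "i * M + j = (i + 1) * M" using True by simp
  then have "gv sg (i * M + j) = hv sg (i + 1) (t ! 0)" using M1 by (simp add: gv_def)
  also have "\<dots> = hv sg i (t ! M)" using ab by (simp add: hv_def distrib_right)
  finally show ?thesis using True by simp
next
  case False
  then have jM: "j < M" using j by simp
  then have "(i * M + j) div M = i" "(i * M + j) mod M = j" by auto
  then show ?thesis by (simp add: gv_def)
qed

lemma hv_mono:
  assumes sg: "sg \<in> Fam" and i: "i < k" and v: "v \<in> {1..Suc M}" "v' \<in> {1..Suc M}" and vv: "v < v'"
  shows "hv sg i v < hv sg i v'"
proof -
  let ?a = "t ! 0" and ?b = "t ! M"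
  have bnd: "sg w i < k" if "w \<in> {1..Suc M}" "w < ?a \<or> w > ?b" for w
    using sg_bound[OF sg _ i, of w] that by (simp add: Rset_def)
  have iD: "i * (?b - ?a) + (?b - ?a) \<le> k * (?b - ?a)"
    using i by (metis add.commute mult.commute mult_Suc_right mult_le_mono2 Suc_leI)
  consider (LL) "v' < ?a" | (LC) "v < ?a" "?a \<le> v'" "v' \<le> ?b" | (LU) "v < ?a" "v' > ?b"
    | (CC) "?a \<le> v" "v' \<le> ?b" | (CU) "?a \<le> v" "v \<le> ?b" "v' > ?b" | (UU) "v > ?b"
    using vv by linarith
  then show ?thesis
  proof cases
    case LL
    then have "(v - 1) * k + sg v i < (v' - 1) * k + sg v' i"
      using lin_less[OF bnd[of v]] v vv by auto
    then show ?thesis using LL vv by (simp add: hv_def)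
  next
    case LC
    have "(v - 1) * k + sg v i < (v - 1) * k + k" using bnd[of v] v LC by simp
    also have "\<dots> = v * k" using v by (cases v) auto
    also have "\<dots> \<le> k * (?a - 1)"
    proof -
      have "v \<le> ?a - 1" using LC by linarith
      then have "v * k \<le> (?a - 1) * k" by (rule mult_right_mono) simp
      then show ?thesis by (simp add: mult.commute)
    qed
    finally show ?thesis using LC by (simp add: hv_def)
  next
    case LU
    have "(v - 1) * k + sg v i < (v - 1) * k + k" using bnd[of v] v LU by simp
    also have "\<dots> = v * k" using v by (cases v) auto
    also have "\<dots> \<le> k * (?a - 1)"
    proof -
      have "v \<le> ?a - 1" using LU by linarith
      then have "v * k \<le> (?a - 1) * k" by (rule mult_right_mono) simp
      then show ?thesis by (simp add: mult.commute)
    qed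
    finally show ?thesis using LU ab by (simp add: hv_def)
  next
    case CC
    then show ?thesis using vv ab by (simp add: hv_def)
  next
    case CU
    have "i * (?b - ?a) + (v - ?a) \<le> k * (?b - ?a)" using iD CU by linarith
    then show ?thesis using CU ab by (simp add: hv_def)
  next
    case UU
    then have "(v - ?b - 1) * k + sg v i < (v' - ?b - 1) * k + sg v' i"
      using lin_less[OF bnd[of v]] v vv by auto
    then show ?thesis using UU vv ab by (simp add: hv_def)
  qed
qed

lemma q_facts:
  assumes q: "q < 1 + k * M"
  shows "q mod M < M" "q div M \<le> k" "t ! (q mod M) \<noteq> t ! 0 \<Longrightarrow> q div M < k"
    "t ! (q mod M) \<in> {1..Suc M}" "t ! (q mod M) \<noteq> t ! M"
proof -
  show "q mod M < M" using M1 by simp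
  show ik: "q div M \<le> k"
  proof -
    have "q div M \<le> (k * M) div M" using q by (intro div_le_mono) simp
    then show ?thesis using M1 by simp
  qed
  show "t ! (q mod M) \<noteq> t ! 0 \<Longrightarrow> q div M < k"
  proof (rule ccontr)
    assume ne: "t ! (q mod M) \<noteq> t ! 0" and "\<not> q div M < k"
    then have "q div M = k" using ik by simp
    then have "k * M \<le> q" using div_times_less_eq_dividend[of q M] by simp
    then have "q = k * M" using q by linarith
    then show False using ne by simp
  qed
  have "q mod M < Suc M" using M1 by (meson less_SucI mod_less_divisor zero_less_one le_trans less_le_trans)
  then show "t ! (q mod M) \<in> {1..Suc M}" by (rule tj_range)
  show "t ! (q mod M) \<noteq> t ! M" using tj_ne_b M1 by simp
qed

lemma gv_bounds:
  assumes sg: "sg \<in> Fam" and q: "q < 1 + k * M"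
  shows "t ! (q mod M) < t ! 0 \<Longrightarrow> 1 \<le> gv sg q \<and> gv sg q \<le> k * (t ! 0 - 1)"
    "t ! 0 \<le> t ! (q mod M) \<Longrightarrow> t ! (q mod M) \<le> t ! M \<Longrightarrow>
        k * (t ! 0 - 1) < gv sg q \<and> gv sg q \<le> k * (t ! 0 - 1) + 1 + k * (t ! M - t ! 0)"
    "t ! M < t ! (q mod M) \<Longrightarrow> k * (t ! 0 - 1) + 1 + k * (t ! M - t ! 0) < gv sg q \<and> gv sg q \<le> 1 + k * M"
proof -
  let ?i = "q div M" and ?v = "t ! (q mod M)" and ?a = "t ! 0" and ?b = "t ! M"
  note qf = q_facts[OF q]
  have bnd: "sg ?v ?i < k" if "?v < ?a \<or> ?v > ?b"
  proof -
    have "?i < k" using qf(3) that ab by auto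
    moreover have "?v \<in> Rset" using qf(4) that by (simp add: Rset_def)
    ultimately show ?thesis using sg_bound[OF sg] by blast
  qed
  show "?v < ?a \<Longrightarrow> 1 \<le> gv sg q \<and> gv sg q \<le> k * (?a - 1)"
  proof -
    assume L: "?v < ?a"
    have "(?v - 1) * k + sg ?v ?i < (?v - 1) * k + k" using bnd L by simp
    also have "\<dots> = ?v * k" using qf(4) by (cases ?v) auto
    also have "\<dots> \<le> (?a - 1) * k" using L by (intro mult_right_mono) auto
    finally show ?thesis using L by (simp add: gv_def hv_def mult.commute)
  qed
  show "?a \<le> ?v \<Longrightarrow> ?v \<le> ?b \<Longrightarrow> k * (?a - 1) < gv sg q \<and> gv sg q \<le> k * (?a - 1) + 1 + k * (?b - ?a)"
  proof -
    assume C: "?a \<le> ?v" "?v \<le> ?b"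
    have "?i * (?b - ?a) + (?v - ?a) \<le> k * (?b - ?a)"
    proof (cases "?v = ?a")
      case True
      then show ?thesis using qf(2) by (simp add: mult_right_mono)
    next
      case False
      then have ik: "?i < k" using qf(3) by simp
      have "?v < ?b" using C qf(5) by simp
      then have "?i * (?b - ?a) + (?v - ?a) < ?i * (?b - ?a) + (?b - ?a)" using C by simp
      also have "\<dots> = (?i + 1) * (?b - ?a)" by simp
      also have "\<dots> \<le> k * (?b - ?a)" using ik by (intro mult_right_mono) auto
      finally show ?thesis by simp
    qed
    moreover have "gv sg q = k * (?a - 1) + 1 + (?i * (?b - ?a) + (?v - ?a))"
      using C ab by (simp add: gv_def hv_def)
    ultimately show ?thesis by linarith
  qed
  show "?b < ?v \<Longrightarrow> k * (?a - 1) + 1 + k * (?b - ?a) < gv sg q \<and> gv sg q \<le> 1 + k * M"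
  proof -
    assume U: "?b < ?v"
    have "(?v - ?b - 1) * k + sg ?v ?i < (?v - ?b - 1) * k + k" using bnd U by simp
    also have "\<dots> = (?v - ?b) * k" using U by (cases "?v - ?b") auto
    also have "\<dots> \<le> (Suc M - ?b) * k" using qf(4) by (intro mult_right_mono) auto
    finally have h: "(?v - ?b - 1) * k + sg ?v ?i + 1 \<le> (Suc M - ?b) * k" by simp
    have "k * (?a - 1) + k * (?b - ?a) + k * (Suc M - ?b) = k * M"
      by (simp only: distrib_left[symmetric] sum_M)
    then have e: "k * (?a - 1) + 1 + k * (?b - ?a) + (Suc M - ?b) * k = 1 + k * M"
      by (simp add: mult.commute)
    have "gv sg q = k * (?a - 1) + 1 + k * (?b - ?a) + ((?v - ?b - 1) * k + sg ?v ?i + 1)"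
      using U ab by (simp add: gv_def hv_def)
    then show ?thesis using e h by linarith
  qed
qed

lemma gv_inj:
  assumes sg: "sg \<in> Fam" and q: "q < 1 + k * M" and q': "q' < 1 + k * M"
    and eq: "gv sg q = gv sg q'"
  shows "q = q'"
proof -
  let ?i = "q div M" and ?v = "t ! (q mod M)" and ?a = "t ! 0" and ?b = "t ! M"
  let ?i' = "q' div M" and ?v' = "t ! (q' mod M)"
  note qf = q_facts[OF q] and qf' = q_facts[OF q']
  note B = gv_bounds[OF sg q] and B' = gv_bounds[OF sg q']
  have perm_inj: "sg w i1 = sg w i2 \<Longrightarrow> i1 < k \<Longrightarrow> i2 < k \<Longrightarrow> w \<in> Rset \<Longrightarrow> i1 = i2" for w i1 i2
  proof -
    assume h: "sg w i1 = sg w i2" "i1 < k" "i2 < k" "w \<in> Rset"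
    have "sg w permutes {..<k}" using sg h(4) by (auto simp: Fam_def)
    then have "inj (sg w)" by (rule permutes_inj)
    then show "i1 = i2" using h(1) by (simp add: inj_eq)
  qed
  have bnd: "sg w i < k" if "w \<in> {1..Suc M}" "w < ?a \<or> w > ?b" "i < k" for w i
    using sg_bound[OF sg _ that(3), of w] that by (simp add: Rset_def)
  have vv: "?v = ?v' \<and> ?i = ?i'"
  proof -
    consider (L) "?v < ?a" | (C) "?a \<le> ?v" "?v \<le> ?b" | (U) "?b < ?v" by linarith
    then show ?thesis
    proof cases
      case L
      have L': "?v' < ?a"
      proof (rule ccontr)
        assume "\<not> ?v' < ?a"
        then consider "?a \<le> ?v'" "?v' \<le> ?b" | "?b < ?v'" by linarith
        then show False using B(1)[OF L] B'(2) B'(3) eq by cases fastforce+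
      qed
      have ik: "?i < k" "?i' < k" using qf(3) qf'(3) L L' by auto
      have "(?v - 1) * k + sg ?v ?i = (?v' - 1) * k + sg ?v' ?i'"
        using eq L L' by (simp add: gv_def hv_def)
      then have h: "?v - 1 = ?v' - 1 \<and> sg ?v ?i = sg ?v' ?i'"
        using lin_eq bnd[OF qf(4) _ ik(1)] bnd[OF qf'(4) _ ik(2)] L L' by blast
      moreover have "1 \<le> ?v" "1 \<le> ?v'" using qf(4) qf'(4) by auto
      ultimately have veq: "?v = ?v'" by linarith
      have "sg ?v ?i = sg ?v ?i'" using h veq by simp
      moreover have "?v \<in> Rset" using qf(4) L by (simp add: Rset_def)
      ultimately have "?i = ?i'" using perm_inj ik by blast
      then show ?thesis using veq by simp
    next
      case C
      have C': "?a \<le> ?v' \<and> ?v' \<le> ?b"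
      proof (rule ccontr)
        assume "\<not> (?a \<le> ?v' \<and> ?v' \<le> ?b)"
        then consider "?v' < ?a" | "?b < ?v'" by linarith
        then show False using B(2)[OF C] B'(1) B'(3) eq by cases fastforce+
      qed
      have lt: "?v - ?a < ?b - ?a" "?v' - ?a < ?b - ?a" using C C' qf(5) qf'(5) by auto
      have g1: "gv sg q = k * (?a - 1) + 1 + (?i * (?b - ?a) + (?v - ?a))"
        using C ab by (simp add: gv_def hv_def)
      have g2: "gv sg q' = k * (?a - 1) + 1 + (?i' * (?b - ?a) + (?v' - ?a))"
        using C' ab by (simp add: gv_def hv_def)
      have "?i * (?b - ?a) + (?v - ?a) = ?i' * (?b - ?a) + (?v' - ?a)"
        using eq g1 g2 by linarith
      then have "?i = ?i' \<and> ?v - ?a = ?v' - ?a" using lin_eq[OF lt] by blast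
      then show ?thesis using C C' by auto
    next
      case U
      have U': "?b < ?v'"
      proof (rule ccontr)
        assume "\<not> ?b < ?v'"
        then consider "?v' < ?a" | "?a \<le> ?v'" "?v' \<le> ?b" by linarith
        then show False using B(3)[OF U] B'(1) B'(2) eq by cases fastforce+
      qed
      have ik: "?i < k" "?i' < k" using qf(3) qf'(3) U U' ab by auto
      have "(?v - ?b - 1) * k + sg ?v ?i = (?v' - ?b - 1) * k + sg ?v' ?i'"
        using eq U U' ab by (simp add: gv_def hv_def)
      then have h: "?v - ?b - 1 = ?v' - ?b - 1 \<and> sg ?v ?i = sg ?v' ?i'"
        using lin_eq bnd[OF qf(4) _ ik(1)] bnd[OF qf'(4) _ ik(2)] U U' by blast
      then have veq: "?v = ?v'" using U U' by linarith
      have "sg ?v ?i = sg ?v ?i'" using h veq by simp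
      moreover have "?v \<in> Rset" using qf(4) U by (simp add: Rset_def)
      ultimately have "?i = ?i'" using perm_inj ik by blast
      then show ?thesis using veq by simp
    qed
  qed
  have "q mod M = q' mod M"
    using vv t_facts(1) lt qf(1) qf'(1) by (simp add: nth_eq_iff_index_eq)
  then show ?thesis using vv by (metis div_mult_mod_eq)
qed

lemma slist_in_Xs:
  assumes sg: "sg \<in> Fam"
  shows "slist sg \<in> Xs t k"
proof -
  let ?n = "1 + k * M"
  let ?s = "slist sg"
  have ls: "length ?s = ?n" by (simp add: slist_def)
  have dist: "distinct ?s"
    unfolding slist_def distinct_map
    using gv_inj[OF sg] by (auto simp: inj_on_def)
  have rng: "gv sg q \<in> {1..?n}" if q: "q < ?n" for q
  proof -
    note B = gv_bounds[OF sg q]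
    have kA: "k * (t ! 0 - 1) + 1 + k * (t ! M - t ! 0) \<le> ?n"
    proof -
      have "k * (t ! 0 - 1) + k * (t ! M - t ! 0) \<le> k * M"
        using sum_M by (simp only: distrib_left[symmetric]) (intro mult_left_mono, linarith, simp)
      then show ?thesis by simp
    qed
    consider "t ! (q mod M) < t ! 0" | "t ! 0 \<le> t ! (q mod M)" "t ! (q mod M) \<le> t ! M" | "t ! M < t ! (q mod M)"
      by linarith
    then show ?thesis using B kA by cases fastforce+
  qed
  have "set ?s \<subseteq> {1..?n}" using rng by (auto simp: slist_def)
  moreover have "card (set ?s) = ?n" using dist ls by (simp add: distinct_card)
  ultimately have "set ?s = {1..?n}" by (metis card_atLeastAtMost card_subset_eq diff_Suc_1 finite_atLeastAtMost)
  then have perm: "is_perm ?n ?s" using dist ls by (simp add: is_perm_def)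
  have win: "st (take (Suc M) (drop (i * M) ?s)) = t" if i: "i < k" for i
  proof -
    define w where "w = take (Suc M) (drop (i * M) ?s)"
    have "(i + 1) * M \<le> k * M" using i by (intro mult_right_mono) auto
    then have lw: "length w = Suc M" using ls by (simp add: w_def algebra_simps)
    have wn: "w ! j = hv sg i (t ! j)" if j: "j < Suc M" for j
    proof -
      have "i * M + j < ?n" using \<open>(i + 1) * M \<le> k * M\<close> j by (simp add: algebra_simps)
      have "w ! j = drop (i * M) ?s ! j" unfolding w_def using j by (rule nth_take)
      also have "\<dots> = ?s ! (i * M + j)" using \<open>i * M + j < ?n\<close> ls by simp
      also have "\<dots> = gv sg (i * M + j)" using \<open>i * M + j < ?n\<close> by (simp add: slist_def del: upt_Suc)
      finally have "w ! j = gv sg (i * M + j)" .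
      then show ?thesis using gv_window[OF i, of j] j by simp
    qed
    have "st w = t"
    proof (rule st_eq_by_order)
      show "length w = length t" using lw lt by simp
      show "is_perm (length t) t" using pt lt by simp
      fix j j' assume j: "j < length t" "j' < length t" and tt: "t ! j < t ! j'"
      then show "w ! j < w ! j'" using wn hv_mono[OF sg i tj_range tj_range tt] lt by simp
    qed
    then show ?thesis by (simp add: w_def)
  qed
  show ?thesis using perm win lt by (simp add: Xs_def)
qed

lemma slist_inj: "inj_on slist Fam"
proof (rule inj_onI)
  fix sg sg' assume sg: "sg \<in> Fam" and sg': "sg' \<in> Fam" and eq: "slist sg = slist sg'"
  show "sg = sg'"
  proof (intro ext)
    fix v i
    show "sg v i = sg' v i"
    proof (cases "v \<in> Rset")
      case False
      then show ?thesis using sg sg' by (auto simp: Fam_def PiE_def extensional_def)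
    next
      case True
      have pv: "sg v permutes {..<k}" "sg' v permutes {..<k}" using sg sg' True by (auto simp: Fam_def)
      show ?thesis
      proof (cases "i < k")
        case False
        then show ?thesis using pv by (simp add: permutes_not_in)
      next
        case ik: True
        have "v \<in> set t" using True t_facts(2) by (simp add: Rset_def)
        then obtain j where j: "j < Suc M" "t ! j = v" using lt by (auto simp: in_set_conv_nth)
        have "j \<noteq> M" using True j ab by (auto simp: Rset_def)
        moreover have "j \<noteq> 0"
        proof
          assume "j = 0" then show False using True j ab by (auto simp: Rset_def)
        qed
        ultimately have jM: "j < M" using j by simp
        have qn: "i * M + j < 1 + k * M"
        proof -
          have "(i + 1) * M \<le> k * M" using ik by (intro mult_right_mono) auto
          then show ?thesis using jM by (simp add: algebra_simps)
        qed
        have dm: "(i * M + j) div M = i" "(i * M + j) mod M = j" using jM by auto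
        have "slist sg ! (i * M + j) = slist sg' ! (i * M + j)" using eq by simp
        then have "gv sg (i * M + j) = gv sg' (i * M + j)"
          using qn by (simp add: slist_def del: upt_Suc)
        then have "hv sg i v = hv sg' i v" using dm j by (simp add: gv_def)
        then show ?thesis using True ab by (auto simp: hv_def Rset_def)
      qed
    qed
  qed
qed

lemma lower: "fact k ^ ((t ! 0 - 1) + (Suc M - t ! M)) \<le> card (Xs t k)"
proof -
  have cR: "card Rset = (t ! 0 - 1) + (Suc M - t ! M)"
    unfolding Rset_def using card_out t_facts ab by simp
  have cp: "card {f. f permutes {..<k}} = fact k" by (rule card_permutations) simp_all
  have cF: "card Fam = fact k ^ card Rset"
    by (simp add: Fam_def card_PiE cp Rset_def)
  have "fact k ^ card Rset = card (slist ` Fam)" using slist_inj cF by (simp add: card_image)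
  also have "\<dots> \<le> card (Xs t k)"
  proof (rule card_mono)
    show "finite (Xs t k)" by (rule finite_subset[OF _ finite_perms[of "1 + k * (length t - 1)"]]) (auto simp: Xs_def perms_def)
    show "slist ` Fam \<subseteq> Xs t k" using slist_in_Xs by blast
  qed
  finally show ?thesis using cR by simp
qed

end


theorem theorem4p1:
  fixes p t :: "nat list" and m :: nat
  assumes "is_perm m p" and "is_perm m t"
    and "standard_form p" and "standard_form t"
    and "int (p ! (m - 1)) - int (p ! 0) > int (t ! (m - 1)) - int (t ! 0)"
  shows "(\<exists>K::nat. \<forall>k\<ge>K.
            cluster_num p (1 + k * (m - 1)) k < cluster_num t (1 + k * (m - 1)) k)
         \<and> \<not> strongly_cwilf_equiv p t"
proof -
  have lp: "length p = m" and lt: "length t = m" using assms(1,2) by (auto simp: is_perm_def)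
  have abp: "p ! 0 < p ! (m - 1)" and abt: "t ! 0 < t ! (m - 1)"
    using assms(3,4) lp lt by (auto simp: standard_form_def)
  have m2: "m \<ge> 2"
  proof (rule ccontr)
    assume "\<not> m \<ge> 2"
    then have "m - 1 = 0" by simp
    then show False using abp by simp
  qed
  define M where "M = m - 1"
  have mM: "m = Suc M" and M1: "M \<ge> 1" using m2 by (auto simp: M_def)
  have pp: "is_perm (Suc M) p" and pt: "is_perm (Suc M) t" using assms(1,2) mM by auto
  have lp': "length p = Suc M" and lt': "length t = Suc M" using lp lt mM by auto
  have abp': "p ! 0 < p ! M" and abt': "t ! 0 < t ! M" using abp abt by (auto simp: M_def)
  have rng: "1 \<le> q ! 0 \<and> q ! M \<le> Suc M" if "is_perm (Suc M) q" for q
  proof -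
    have "q ! 0 \<in> set q" "q ! M \<in> set q" using that by (auto simp: is_perm_def)
    then show ?thesis using that by (auto simp: is_perm_def)
  qed
  define Ep where "Ep = (p ! 0 - 1) + (Suc M - p ! M)"
  define Et where "Et = (t ! 0 - 1) + (Suc M - t ! M)"
  have EE: "Ep + 1 \<le> Et"
  proof -
    have "int (p ! M) - int (p ! 0) > int (t ! M) - int (t ! 0)" using assms(5) by (simp add: M_def)
    then show ?thesis using rng[OF pp] rng[OF pt] abp' abt' unfolding Ep_def Et_def by linarith
  qed
  obtain K0 where K0: "\<And>k. k \<ge> K0 \<Longrightarrow> (1 + k * M) ^ (k * Ep) < fact k ^ (Ep + 1)"
    using asym[of M Ep] by blast
  define K where "K = max K0 1"
  have main: "cluster_num p (1 + k * (m - 1)) k < cluster_num t (1 + k * (m - 1)) k" if k: "k \<ge> K" for k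
  proof -
    have k1: "k \<ge> 1" and kK0: "k \<ge> K0" using k by (auto simp: K_def)
    have "cluster_num p (1 + k * (m - 1)) k = card (Xs p k)"
      using cluster_chain[OF lp' M1 k1] by (simp add: M_def)
    also have "\<dots> \<le> (1 + k * M) ^ (k * Ep)"
      using upper[OF lp' M1 pp abp', of k] by (simp add: Ep_def)
    also have "\<dots> < fact k ^ (Ep + 1)" by (rule K0[OF kK0])
    also have "\<dots> \<le> fact k ^ Et"
      by (rule power_increasing[OF EE]) simp
    also have "\<dots> \<le> card (Xs t k)" using lower[OF lt' M1 pt abt', of k] by (simp add: Et_def)
    also have "\<dots> = cluster_num t (1 + k * (m - 1)) k"
      using cluster_chain[OF lt' M1 k1] by (simp add: M_def)
    finally show ?thesis .
  qed
  moreover have "\<not> strongly_cwilf_equiv p t"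
  proof
    assume "strongly_cwilf_equiv p t"
    then have "cluster_num p (1 + K * (m - 1)) K = cluster_num t (1 + K * (m - 1)) K"
      using cwilf_cluster lp lt m2 by simp
    then show False using main[of K] by simp
  qed
  ultimately show ?thesis by blast
qed

end
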